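(* Let $M$ be a duplicial module in a pre-additive category. Then $b_n\pi_n=\pi_{n-1}b_n$ for all $n\ge1$ and $d_n\pi_n=\pi_{n+1}d_n$ for all $n\ge0$.
   Context: Let $\mathcal A$ be a pre-additive category. Let $\Lambda_+$ be the category with objects $[n]$, $n\ge0$, where $\Lambda_+([m],[n])$ is the set of weakly monotone $f:\mathbb Z\to\mathbb Z$ with $f(j+m+1)=f(j)+n+1$ for all $j$ and $f(0)\ge0$. Define $\varepsilon^n_i:[n-1]\to[n]$ ($n\ge1$, $0\le i\le n$) by $\varepsilon^n_i(j)=j$ for $0\le j<i$, $j+1$ for $i\le j\le n-1$, and $\eta^n_i:[n+1]\to[n]$ ($0\le i\le n+1$) by $\eta^n_i(j)=j$ for $0\le j\le i$, $j-1$ for $i<j\le n+1$. A duplicial module is a functor $M:\Lambda_+^{op}\to\mathcal A$; $M_n=M([n])$, $\partial_{n,i}=M(\varepsilon^n_i):M_n\to M_{n-1}$, $s_{n,i}=M(\eta^n_i):M_n\to M_{n+1}$. Convention $M_{-1}=0$, maps into/out of it zero. Define $b_n=\sum_{i=0}^n(-1)^i\partial_{n,i}$ ($b_0=0$), $d_n=\sum_{i=0}^{n+1}(-1)^is_{n,i}$, the Karoubi operator $\kappa_n=(-1)^n(\partial_{n+1,0}s_{n,n+1}-s_{n-1,n}\partial_{n,0})$ (so $\kappa_0=\partial_{1,0}s_{0,1}$), and the Dwyer–Kan operator $\pi_n=(-1)^n\partial_{n+1,0}\kappa_{n+1}^n s_{n,n+1}$. *)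

theory Defs
  imports Main
begin

text \<open>A category with object set Ob, hom-sets Hom a b, composition
 cmp a b c g f (for f : a -> b, g : b -> c, i.e. g o f), identities idm,
 and on every hom-set an abelian group structure (pls, zer, ng) such that
 composition is bilinear.\<close>

record ('o, 'm) preadd_cat =
  Ob  :: "'o set"
  Hom :: "'o \<Rightarrow> 'o \<Rightarrow> 'm set"
  cmp :: "'o \<Rightarrow> 'o \<Rightarrow> 'o \<Rightarrow> 'm \<Rightarrow> 'm \<Rightarrow> 'm"
  idm :: "'o \<Rightarrow> 'm"
  pls :: "'o \<Rightarrow> 'o \<Rightarrow> 'm \<Rightarrow> 'm \<Rightarrow> 'm"
  zer :: "'o \<Rightarrow> 'o \<Rightarrow> 'm"
  ng  :: "'o \<Rightarrow> 'o \<Rightarrow> 'm \<Rightarrow> 'm"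

definition preadditive :: "('o, 'm) preadd_cat \<Rightarrow> bool" where
  "preadditive C \<longleftrightarrow>
     (\<forall>a\<in>Ob C. idm C a \<in> Hom C a a) \<and>
     (\<forall>a\<in>Ob C. \<forall>b\<in>Ob C. \<forall>c\<in>Ob C. \<forall>f\<in>Hom C a b. \<forall>g\<in>Hom C b c.
        cmp C a b c g f \<in> Hom C a c) \<and>
     (\<forall>a\<in>Ob C. \<forall>b\<in>Ob C. \<forall>c\<in>Ob C. \<forall>d\<in>Ob C.
        \<forall>f\<in>Hom C a b. \<forall>g\<in>Hom C b c. \<forall>h\<in>Hom C c d.
        cmp C a c d h (cmp C a b c g f) = cmp C a b d (cmp C b c d h g) f) \<and>
     (\<forall>a\<in>Ob C. \<forall>b\<in>Ob C. \<forall>f\<in>Hom C a b.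
        cmp C a b b (idm C b) f = f \<and> cmp C a a b f (idm C a) = f) \<and>
     (\<forall>a\<in>Ob C. \<forall>b\<in>Ob C.
        zer C a b \<in> Hom C a b \<and>
        (\<forall>f\<in>Hom C a b. \<forall>g\<in>Hom C a b. pls C a b f g \<in> Hom C a b) \<and>
        (\<forall>f\<in>Hom C a b. ng C a b f \<in> Hom C a b) \<and>
        (\<forall>f\<in>Hom C a b. \<forall>g\<in>Hom C a b. \<forall>h\<in>Hom C a b.
           pls C a b (pls C a b f g) h = pls C a b f (pls C a b g h)) \<and>
        (\<forall>f\<in>Hom C a b. \<forall>g\<in>Hom C a b. pls C a b f g = pls C a b g f) \<and>
        (\<forall>f\<in>Hom C a b. pls C a b (zer C a b) f = f) \<and>
        (\<forall>f\<in>Hom C a b. pls C a b (ng C a b f) f = zer C a b)) \<and>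
     (\<forall>a\<in>Ob C. \<forall>b\<in>Ob C. \<forall>c\<in>Ob C.
        \<forall>f\<in>Hom C a b. \<forall>f'\<in>Hom C a b. \<forall>g\<in>Hom C b c. \<forall>g'\<in>Hom C b c.
        cmp C a b c (pls C b c g g') f = pls C a c (cmp C a b c g f) (cmp C a b c g' f) \<and>
        cmp C a b c g (pls C a b f f') = pls C a c (cmp C a b c g f) (cmp C a b c g f'))"

text \<open>Morphisms [m] -> [n]: weakly monotone f : Z -> Z with
  f(j+m+1) = f(j)+n+1 and f(0) >= 0; composition is composition of functions.\<close>

definition lam_hom :: "nat \<Rightarrow> nat \<Rightarrow> (int \<Rightarrow> int) set" where
  "lam_hom m n = {f. mono f \<and> (\<forall>j. f (j + int m + 1) = f j + int n + 1) \<and> f 0 \<ge> 0}"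

text \<open>epsilon^n_i : [n-1] -> [n] (n >= 1), extended periodically to Z.\<close>
definition eps :: "nat \<Rightarrow> nat \<Rightarrow> int \<Rightarrow> int" where
  "eps n i j = (j div int n) * (int n + 1) +
     (if j mod int n < int i then j mod int n else j mod int n + 1)"

text \<open>eta^n_i : [n+1] -> [n], extended periodically to Z.\<close>
definition eta :: "nat \<Rightarrow> nat \<Rightarrow> int \<Rightarrow> int" where
  "eta n i j = (j div (int n + 2)) * (int n + 1) +
     (if j mod (int n + 2) \<le> int i then j mod (int n + 2) else j mod (int n + 2) - 1)"

text \<open>A functor M : Lambda_+^op -> C, given by objects Mo n = M_n and
  Mm m n f = M(f) : M_n -> M_m for f : [m] -> [n].\<close>

definition duplicial :: "('o, 'm) preadd_cat \<Rightarrow> (nat \<Rightarrow> 'o) \<Rightarrow>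
    (nat \<Rightarrow> nat \<Rightarrow> (int \<Rightarrow> int) \<Rightarrow> 'm) \<Rightarrow> bool" where
  "duplicial C Mo Mm \<longleftrightarrow>
     (\<forall>n. Mo n \<in> Ob C) \<and>
     (\<forall>m n f. f \<in> lam_hom m n \<longrightarrow> Mm m n f \<in> Hom C (Mo n) (Mo m)) \<and>
     (\<forall>n. Mm n n id = idm C (Mo n)) \<and>
     (\<forall>l m n f g. f \<in> lam_hom l m \<longrightarrow> g \<in> lam_hom m n \<longrightarrow>
        Mm l n (g \<circ> f) = cmp C (Mo n) (Mo m) (Mo l) (Mm l m f) (Mm m n g))"

definition face :: "(nat \<Rightarrow> nat \<Rightarrow> (int \<Rightarrow> int) \<Rightarrow> 'm) \<Rightarrow> nat \<Rightarrow> nat \<Rightarrow> 'm" where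
  "face Mm n i = Mm (n - 1) n (eps n i)"

definition degen :: "(nat \<Rightarrow> nat \<Rightarrow> (int \<Rightarrow> int) \<Rightarrow> 'm) \<Rightarrow> nat \<Rightarrow> nat \<Rightarrow> 'm" where
  "degen Mm n i = Mm (n + 1) n (eta n i)"

definition sgnm :: "('o, 'm) preadd_cat \<Rightarrow> 'o \<Rightarrow> 'o \<Rightarrow> nat \<Rightarrow> 'm \<Rightarrow> 'm" where
  "sgnm C a b k f = (if even k then f else ng C a b f)"

definition altsum :: "('o, 'm) preadd_cat \<Rightarrow> 'o \<Rightarrow> 'o \<Rightarrow> nat \<Rightarrow> (nat \<Rightarrow> 'm) \<Rightarrow> 'm" where
  "altsum C a b n F = foldr (\<lambda>i acc. pls C a b (sgnm C a b i (F i)) acc) [0..<Suc n] (zer C a b)"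

definition bop :: "('o, 'm) preadd_cat \<Rightarrow> (nat \<Rightarrow> 'o) \<Rightarrow>
    (nat \<Rightarrow> nat \<Rightarrow> (int \<Rightarrow> int) \<Rightarrow> 'm) \<Rightarrow> nat \<Rightarrow> 'm" where
  "bop C Mo Mm n = altsum C (Mo n) (Mo (n - 1)) n (face Mm n)"

definition dop :: "('o, 'm) preadd_cat \<Rightarrow> (nat \<Rightarrow> 'o) \<Rightarrow>
    (nat \<Rightarrow> nat \<Rightarrow> (int \<Rightarrow> int) \<Rightarrow> 'm) \<Rightarrow> nat \<Rightarrow> 'm" where
  "dop C Mo Mm n = altsum C (Mo n) (Mo (n + 1)) (n + 1) (degen Mm n)"

definition karoubi :: "('o, 'm) preadd_cat \<Rightarrow> (nat \<Rightarrow> 'o) \<Rightarrow>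
    (nat \<Rightarrow> nat \<Rightarrow> (int \<Rightarrow> int) \<Rightarrow> 'm) \<Rightarrow> nat \<Rightarrow> 'm" where
  "karoubi C Mo Mm n =
     (if n = 0 then cmp C (Mo 0) (Mo 1) (Mo 0) (face Mm 1 0) (degen Mm 0 1)
      else sgnm C (Mo n) (Mo n) n
        (pls C (Mo n) (Mo n)
          (cmp C (Mo n) (Mo (n + 1)) (Mo n) (face Mm (n + 1) 0) (degen Mm n (n + 1)))
          (ng C (Mo n) (Mo n)
            (cmp C (Mo n) (Mo (n - 1)) (Mo n) (degen Mm (n - 1) n) (face Mm n 0)))))"

fun karoubi_pow :: "('o, 'm) preadd_cat \<Rightarrow> (nat \<Rightarrow> 'o) \<Rightarrow>
    (nat \<Rightarrow> nat \<Rightarrow> (int \<Rightarrow> int) \<Rightarrow> 'm) \<Rightarrow> nat \<Rightarrow> nat \<Rightarrow> 'm" where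
  "karoubi_pow C Mo Mm n 0 = idm C (Mo n)"
| "karoubi_pow C Mo Mm n (Suc k) =
     cmp C (Mo n) (Mo n) (Mo n) (karoubi C Mo Mm n) (karoubi_pow C Mo Mm n k)"

definition dk :: "('o, 'm) preadd_cat \<Rightarrow> (nat \<Rightarrow> 'o) \<Rightarrow>
    (nat \<Rightarrow> nat \<Rightarrow> (int \<Rightarrow> int) \<Rightarrow> 'm) \<Rightarrow> nat \<Rightarrow> 'm" where
  "dk C Mo Mm n = sgnm C (Mo n) (Mo n) n
     (cmp C (Mo n) (Mo (n + 1)) (Mo n) (face Mm (n + 1) 0)
        (cmp C (Mo n) (Mo (n + 1)) (Mo (n + 1)) (karoubi_pow C Mo Mm (n + 1) n)
           (degen Mm n (n + 1))))"

end

theory Submission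
  imports Defs "HOL-Library.Poly_Mapping" "HOL-Algebra.FiniteProduct"
begin


lemma lam_hom_periodic:
  assumes "f \<in> lam_hom m n"
  shows "f (x + q * (int m + 1)) = f x + q * (int n + 1)"
proof -
  have P: "\<And>j. f (j + (int m + 1)) = f j + (int n + 1)"
    using assms unfolding lam_hom_def by (simp add: add.assoc)
  show ?thesis
  proof (induction q rule: int_induct[where k=0])
    case base then show ?case by simp
  next
    case (step1 i)
    have "f (x + (i + 1) * (int m + 1)) = f ((x + i * (int m + 1)) + (int m + 1))"
      by (simp add: algebra_simps)
    also have "\<dots> = f (x + i * (int m + 1)) + (int n + 1)" by (rule P)
    also have "\<dots> = f x + (i+1) * (int n + 1)" unfolding step1 by (simp add: algebra_simps)
    finally show ?case .
  next
    case (step2 i)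
    have "f (x + i * (int m + 1)) = f ((x + (i - 1) * (int m + 1)) + (int m + 1))"
      by (simp add: algebra_simps)
    also have "\<dots> = f (x + (i - 1) * (int m + 1)) + (int n + 1)" using P by simp
    finally show ?case using step2 by (simp add: algebra_simps)
  qed
qed

lemma lam_hom_eqI:
  assumes "f \<in> lam_hom m n" "g \<in> lam_hom m n"
    and "\<And>x. 0 \<le> x \<Longrightarrow> x \<le> int m \<Longrightarrow> f x = g x"
  shows "f = g"
proof
  fix x
  define r where "r = x mod (int m + 1)"
  define q where "q = x div (int m + 1)"
  have x: "x = r + q * (int m + 1)" unfolding r_def q_def by (simp add: mod_div_mult_eq)
  have r: "0 \<le> r" "r \<le> int m" unfolding r_def using pos_mod_bound[of "int m + 1" x] by auto
  show "f x = g x" unfolding x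
    using lam_hom_periodic[OF assms(1)] lam_hom_periodic[OF assms(2)] assms(3)[OF r] by simp
qed

lemma lam_homI:
  assumes P: "\<And>x. f (x + int m + 1) = f x + int n + 1"
    and S: "\<And>x. 0 \<le> x \<Longrightarrow> x \<le> int m \<Longrightarrow> f x \<le> f (x + 1)"
    and Z: "f 0 \<ge> 0"
  shows "f \<in> lam_hom m n"
proof -
  have fm: "f \<in> {f. \<forall>j. f (j + int m + 1) = f j + int n + 1}" using P by simp
  have per: "\<And>x q. f (x + q * (int m + 1)) = f x + q * (int n + 1)"
  proof -
    fix x q
    have "f \<in> {f. mono f \<and> (\<forall>j. f (j + int m + 1) = f j + int n + 1) \<and> f 0 \<ge> 0} \<or> True" by simp
    show "f (x + q * (int m + 1)) = f x + q * (int n + 1)"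
    proof (induction q rule: int_induct[where k=0])
      case base then show ?case by simp
    next
      case (step1 i)
      have "f (x + (i + 1) * (int m + 1)) = f ((x + i * (int m + 1)) + int m + 1)"
        by (simp add: algebra_simps)
      also have "\<dots> = f (x + i * (int m + 1)) + int n + 1" by (rule P)
      also have "\<dots> = f x + (i+1) * (int n + 1)" unfolding step1 by (simp add: algebra_simps)
      finally show ?case .
    next
      case (step2 i)
      have "f (x + i * (int m + 1)) = f ((x + (i - 1) * (int m + 1)) + int m + 1)"
        by (simp add: algebra_simps)
      also have "\<dots> = f (x + (i - 1) * (int m + 1)) + int n + 1" using P by simp
      finally show ?case using step2 by (simp add: algebra_simps)
    qed
  qed
  have step: "\<And>x. f x \<le> f (x + 1)"
  proof -
    fix x
    define r where "r = x mod (int m + 1)"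
    define q where "q = x div (int m + 1)"
    have x: "x = r + q * (int m + 1)" unfolding r_def q_def by (simp add: mod_div_mult_eq)
    have r: "0 \<le> r" "r \<le> int m" unfolding r_def using pos_mod_bound[of "int m + 1" x] by auto
    have "f (x + 1) = f ((r + 1) + q * (int m + 1))" unfolding x by (simp add: algebra_simps)
    then show "f x \<le> f (x + 1)" unfolding x using per S[OF r] by simp
  qed
  have "mono f"
  proof (rule monoI)
    fix x y :: int assume "x \<le> y"
    then obtain d where d: "y = x + int d" by (metis le_iff_add zle_iff_zadd)
    have "f x \<le> f (x + int d)"
    proof (induction d)
      case 0 then show ?case by simp
    next
      case (Suc d)
      have "x + int (Suc d) = x + int d + 1" by simp
      then show ?case using Suc step[of "x + int d"] by (metis order_trans)
    qed
    then show "f x \<le> f y" using d by simp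
  qed
  then show ?thesis unfolding lam_hom_def using P Z by simp
qed

lemma lam_hom_comp:
  assumes "f \<in> lam_hom l m" "g \<in> lam_hom m n"
  shows "g \<circ> f \<in> lam_hom l n"
proof -
  have mf: "mono f" and mg: "mono g" using assms unfolding lam_hom_def by auto
  have "mono (g \<circ> f)" by (rule monoI) (simp add: mf mg monoD)
  moreover have "\<forall>j. (g \<circ> f) (j + int l + 1) = (g \<circ> f) j + int n + 1"
    using assms unfolding lam_hom_def by (simp add: add.assoc)
  moreover have "(g \<circ> f) 0 \<ge> 0"
  proof -
    have "f 0 \<ge> 0" "g 0 \<ge> 0" "mono g" using assms unfolding lam_hom_def by auto
    then show ?thesis by (metis comp_apply monoD order_trans)
  qed
  ultimately show ?thesis unfolding lam_hom_def by simp
qed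

lemma id_lam_hom: "id \<in> lam_hom n n"
  unfolding lam_hom_def by (simp add: mono_def)

lemma shift_lam_hom: "k \<ge> 0 \<Longrightarrow> (\<lambda>x. x + k) \<in> lam_hom n n"
  unfolding lam_hom_def by (simp add: mono_def)

lemma eps_shift: assumes "1 \<le> n" shows "eps n i (x + int n) = eps n i x + int n + 1"
proof -
  have d: "(x + int n) div int n = x div int n + 1" using assms div_add_self2[of "int n" x] by simp
  have m: "(x + int n) mod int n = x mod int n" by simp
  show ?thesis unfolding eps_def d m by (simp add: algebra_simps)
qed

lemma eps_val: "0 \<le> x \<Longrightarrow> x < int n \<Longrightarrow> eps n i x = (if x < int i then x else x + 1)"
  unfolding eps_def by simp

lemma eps_val2: "1 \<le> n \<Longrightarrow> int n \<le> x \<Longrightarrow> x < 2 * int n \<Longrightarrow>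
   eps n i x = int n + 1 + (if x - int n < int i then x - int n else x - int n + 1)"
  using eps_shift[of n i "x - int n"] eps_val[of "x - int n" n i] by simp

lemma eps_lam_hom: "1 \<le> n \<Longrightarrow> eps n i \<in> lam_hom (n - 1) n"
  apply (rule lam_homI)
  subgoal using eps_shift[of n i] by simp
  subgoal for x
    by (cases "x + 1 < int n") (auto simp: eps_val eps_val2)
  subgoal by (simp add: eps_val)
  done

lemma eta_shift: "eta n i (x + int n + 2) = eta n i x + int n + 1"
proof -
  have d: "(x + (int n + 2)) div (int n + 2) = x div (int n + 2) + 1" using div_add_self2[of "int n + 2" x] by simp
  have m: "(x + (int n + 2)) mod (int n + 2) = x mod (int n + 2)" by simp
  have "eta n i (x + (int n + 2)) = eta n i x + int n + 1"
    unfolding eta_def d m by (simp add: algebra_simps)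
  then show ?thesis by (simp add: add.assoc)
qed

lemma eta_val: "0 \<le> x \<Longrightarrow> x < int n + 2 \<Longrightarrow> eta n i x = (if x \<le> int i then x else x - 1)"
  unfolding eta_def by simp

lemma eta_val2: "int n + 2 \<le> x \<Longrightarrow> x < 2 * int n + 4 \<Longrightarrow>
   eta n i x = int n + 1 + (if x - int n - 2 \<le> int i then x - int n - 2 else x - int n - 3)"
  using eta_shift[of n i "x - int n - 2"] eta_val[of "x - int n - 2" n i] by simp

lemma eta_lam_hom: "eta n i \<in> lam_hom (n + 1) n"
  apply (rule lam_homI)
  subgoal for x using eta_shift[of n i x] by (simp add: add.assoc add.commute)
  subgoal for x
    by (cases "x + 1 < int n + 2") (auto simp: eta_val eta_val2)
  subgoal by (simp add: eta_val)
  done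



lemmas vals = eps_val eps_val2 eta_val eta_val2

lemma eps_lh: assumes "1 \<le> n" "m + 1 = n" shows "eps n i \<in> lam_hom m n"
proof -
  have "n - 1 = m" using assms by simp
  then show ?thesis using eps_lam_hom[of n i] assms by simp
qed

lemma eps_v: "1 \<le> n \<Longrightarrow> 0 \<le> x \<Longrightarrow> x < 2 * int n \<Longrightarrow> eps n i x =
  (if x < int n then (if x < int i then x else x + 1) else (if x - int n < int i then x + 1 else x + 2))"
  using eps_val[of x n i] eps_val2[of n x i] by auto

lemma eta_v: "0 \<le> x \<Longrightarrow> x < 2 * int n + 4 \<Longrightarrow> eta n i x =
  (if x < int n + 2 then (if x \<le> int i then x else x - 1) else (if x - int n - 2 \<le> int i then x - 1 else x - 2))"
  using eta_val[of x n i] eta_val2[of n x i] by auto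
lemma eta_lh: "m = n + 1 \<Longrightarrow> eta n i \<in> lam_hom m n"
  using eta_lam_hom[of n i] by simp
lemma sh_lh: "0 \<le> k \<Longrightarrow> (\<lambda>x. x + k) \<in> lam_hom n n"
  by (rule shift_lam_hom)

lemma FF_fun:
  assumes "2 \<le> n" "i < j" "j \<le> n"
  shows "eps n j \<circ> eps (n-1) i = eps n i \<circ> eps (n-1) (j-1)"
proof (rule lam_hom_eqI)
  show "eps n j \<circ> eps (n-1) i \<in> lam_hom (n-2) n"
    by (rule lam_hom_comp[where m="n-1"]; rule eps_lh eta_lh sh_lh; use assms in simp)
  show "eps n i \<circ> eps (n-1) (j-1) \<in> lam_hom (n-2) n"
    by (rule lam_hom_comp[where m="n-1"]; rule eps_lh eta_lh sh_lh; use assms in simp)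
  fix x :: int assume "0 \<le> x" "x \<le> int (n-2)"
  then show "(eps n j \<circ> eps (n-1) i) x = (eps n i \<circ> eps (n-1) (j-1)) x"
    using assms by (auto simp: eps_v eta_v split: if_splits)
qed

lemma FS1_fun:
  assumes "k = i \<or> k + 1 = i" "i \<le> n + 1"
  shows "eta n k \<circ> eps (n+1) i = id"
proof (rule lam_hom_eqI)
  show "eta n k \<circ> eps (n+1) i \<in> lam_hom n n"
    by (rule lam_hom_comp[where m="n+1"]; rule eps_lh eta_lh sh_lh; use assms in simp)
  show "id \<in> lam_hom n n" by (rule id_lam_hom)
  fix x :: int assume "0 \<le> x" "x \<le> int n"
  then show "(eta n k \<circ> eps (n+1) i) x = id x"
    using assms by (auto simp: eps_v eta_v split: if_splits)
qed

lemma FS2_fun: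
  assumes "1 \<le> n" "i < k" "k \<le> n + 1" "1 \<le> i \<or> k \<le> n"
  shows "eta n k \<circ> eps (n+1) i = eps n i \<circ> eta (n-1) (k-1)"
proof (rule lam_hom_eqI)
  show "eta n k \<circ> eps (n+1) i \<in> lam_hom n n"
    by (rule lam_hom_comp[where m="n+1"]; rule eps_lh eta_lh sh_lh; use assms in simp)
  show "eps n i \<circ> eta (n-1) (k-1) \<in> lam_hom n n"
    by (rule lam_hom_comp[where m="n-1"]; rule eps_lh eta_lh sh_lh; use assms in simp)
  fix x :: int assume "0 \<le> x" "x \<le> int n"
  then show "(eta n k \<circ> eps (n+1) i) x = (eps n i \<circ> eta (n-1) (k-1)) x"
    using assms by (auto simp: eps_v eta_v split: if_splits)
qed

lemma FS3_fun:
  assumes "1 \<le> n" "k + 1 < i" "i \<le> n + 1"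
  shows "eta n k \<circ> eps (n+1) i = eps n (i-1) \<circ> eta (n-1) k"
proof (rule lam_hom_eqI)
  show "eta n k \<circ> eps (n+1) i \<in> lam_hom n n"
    by (rule lam_hom_comp[where m="n+1"]; rule eps_lh eta_lh sh_lh; use assms in simp)
  show "eps n (i-1) \<circ> eta (n-1) k \<in> lam_hom n n"
    by (rule lam_hom_comp[where m="n-1"]; rule eps_lh eta_lh sh_lh; use assms in simp)
  fix x :: int assume "0 \<le> x" "x \<le> int n"
  then show "(eta n k \<circ> eps (n+1) i) x = (eps n (i-1) \<circ> eta (n-1) k) x"
    using assms by (auto simp: eps_v eta_v split: if_splits)
qed

lemma SS1_fun:
  assumes "1 \<le> n" "k \<le> j" "j \<le> n"
  shows "eta (n-1) j \<circ> eta n k = eta (n-1) k \<circ> eta n (j+1)"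
proof (rule lam_hom_eqI)
  show "eta (n-1) j \<circ> eta n k \<in> lam_hom (n+1) (n-1)"
    by (rule lam_hom_comp[where m="n"]; rule eps_lh eta_lh sh_lh; use assms in simp)
  show "eta (n-1) k \<circ> eta n (j+1) \<in> lam_hom (n+1) (n-1)"
    by (rule lam_hom_comp[where m="n"]; rule eps_lh eta_lh sh_lh; use assms in simp)
  fix x :: int assume "0 \<le> x" "x \<le> int (n+1)"
  then show "(eta (n-1) j \<circ> eta n k) x = (eta (n-1) k \<circ> eta n (j+1)) x"
    using assms by (auto simp: eps_v eta_v split: if_splits)
qed

lemma SS2_fun:
  assumes "1 \<le> n" "j < k" "k \<le> n + 1"
  shows "eta (n-1) j \<circ> eta n k = eta (n-1) (k-1) \<circ> eta n j"
proof (rule lam_hom_eqI)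
  show "eta (n-1) j \<circ> eta n k \<in> lam_hom (n+1) (n-1)"
    by (rule lam_hom_comp[where m="n"]; rule eps_lh eta_lh sh_lh; use assms in simp)
  show "eta (n-1) (k-1) \<circ> eta n j \<in> lam_hom (n+1) (n-1)"
    by (rule lam_hom_comp[where m="n"]; rule eps_lh eta_lh sh_lh; use assms in simp)
  fix x :: int assume "0 \<le> x" "x \<le> int (n+1)"
  then show "(eta (n-1) j \<circ> eta n k) x = (eta (n-1) (k-1) \<circ> eta n j) x"
    using assms by (auto simp: eps_v eta_v split: if_splits)
qed

lemma T0_fun: "eta n (n+1) \<circ> eps (n+1) 0 = (\<lambda>x. x + 1)"
proof (rule lam_hom_eqI)
  show "eta n (n+1) \<circ> eps (n+1) 0 \<in> lam_hom n n"
    by (rule lam_hom_comp[where m="n+1"]; rule eps_lh eta_lh sh_lh; simp)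
  show "(\<lambda>x. x + 1) \<in> lam_hom n n" by (rule shift_lam_hom) simp
  fix x :: int assume "0 \<le> x" "x \<le> int n"
  then show "(eta n (n+1) \<circ> eps (n+1) 0) x = x + 1"
    by (auto simp: eps_v eta_v split: if_splits)
qed

lemma TF_fun:
  assumes "j \<le> n"
  shows "(\<lambda>x. x + 1) \<circ> eps (n+1) j = eps (n+1) (j+1) \<circ> (\<lambda>x. x + 1)"
proof (rule lam_hom_eqI)
  show "(\<lambda>x. x + 1) \<circ> eps (n+1) j \<in> lam_hom n (n+1)"
    by (rule lam_hom_comp[where m="n+1"]; rule eps_lh eta_lh sh_lh; use assms in simp)
  show "eps (n+1) (j+1) \<circ> (\<lambda>x. x + 1) \<in> lam_hom n (n+1)"
    by (rule lam_hom_comp[where m="n"]; rule eps_lh eta_lh sh_lh; use assms in simp)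
  fix x :: int assume "0 \<le> x" "x \<le> int n"
  then show "((\<lambda>x. x + 1) \<circ> eps (n+1) j) x = (eps (n+1) (j+1) \<circ> (\<lambda>x. x + 1)) x"
    using assms by (auto simp: eps_v eta_v split: if_splits)
qed

lemma TF2_fun: "(\<lambda>x. x + 1) \<circ> eps (n+1) (n+1) = eps (n+1) 0"
proof (rule lam_hom_eqI)
  show "(\<lambda>x. x + 1) \<circ> eps (n+1) (n+1) \<in> lam_hom n (n+1)"
    by (rule lam_hom_comp[where m="n+1"]; rule eps_lh eta_lh sh_lh; simp)
  show "eps (n+1) 0 \<in> lam_hom n (n+1)"
    using eps_lam_hom[of "n+1" 0] by simp
  fix x :: int assume "0 \<le> x" "x \<le> int n"
  then show "((\<lambda>x. x + 1) \<circ> eps (n+1) (n+1)) x = eps (n+1) 0 x"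
    by (auto simp: eps_v eta_v split: if_splits)
qed

lemma TS_fun:
  assumes "1 \<le> j" "j \<le> n"
  shows "eta (n-1) j \<circ> (\<lambda>x. x + 1) = (\<lambda>x. x + 1) \<circ> eta (n-1) (j-1)"
proof (rule lam_hom_eqI)
  show "eta (n-1) j \<circ> (\<lambda>x. x + 1) \<in> lam_hom n (n-1)"
    by (rule lam_hom_comp[where m="n"]; rule eps_lh eta_lh sh_lh; use assms in simp)
  show "(\<lambda>x. x + 1) \<circ> eta (n-1) (j-1) \<in> lam_hom n (n-1)"
    by (rule lam_hom_comp[where m="n-1"]; rule eps_lh eta_lh sh_lh; use assms in simp)
  fix x :: int assume "0 \<le> x" "x \<le> int n"
  then show "(eta (n-1) j \<circ> (\<lambda>x. x + 1)) x = ((\<lambda>x. x + 1) \<circ> eta (n-1) (j-1)) x"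
    using assms by (auto simp: eps_v eta_v split: if_splits)
qed

lemma TnF_fun:
  assumes "1 \<le> n"
  shows "(\<lambda>x. x + (int n + 1)) \<circ> eps n i = eps n i \<circ> (\<lambda>x. x + int n)"
  using eps_shift[OF assms] by (auto simp: add.assoc)

lemma TnS_fun:
  shows "(\<lambda>x. x + (int n + 1)) \<circ> eta n i = eta n i \<circ> (\<lambda>x. x + (int (n+1) + 1))"
proof
  fix x
  have "x + (int (n+1) + 1) = x + int n + 2" by simp
  then show "((\<lambda>x. x + (int n + 1)) \<circ> eta n i) x = (eta n i \<circ> (\<lambda>x. x + (int (n+1) + 1))) x"
    using eta_shift[of n i x] by (simp add: ac_simps)
qed



datatype endo = E (fn: "int \<Rightarrow> int")

instantiation endo :: monoid_add
begin
definition zero_endo_def: "0 = E id"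
definition plus_endo_def: "a + b = E (fn b \<circ> fn a)"
instance by standard (auto simp: zero_endo_def plus_endo_def comp_assoc)
end

type_synonym R = "endo \<Rightarrow>\<^sub>0 int"

definition mk :: "(int \<Rightarrow> int) \<Rightarrow> R" where "mk f = Poly_Mapping.single (E f) 1"

lemma mk_mult: "mk f * mk g = mk (g \<circ> f)"
  by (simp add: mk_def mult_single plus_endo_def)

lemma mk_id: "mk id = 1"
  by (simp add: mk_def zero_endo_def[symmetric])

definition fc :: "nat \<Rightarrow> nat \<Rightarrow> R" where "fc n i = mk (eps n i)"
definition dg :: "nat \<Rightarrow> nat \<Rightarrow> R" where "dg n i = mk (eta n i)"
definition tt :: R where "tt = mk (\<lambda>x. x + 1)"
definition TT :: "nat \<Rightarrow> R" where "TT n = mk (\<lambda>x. x + (int n + 1))"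

lemma FF_r: "2 \<le> n \<Longrightarrow> i < j \<Longrightarrow> j \<le> n \<Longrightarrow> fc (n-1) i * fc n j = fc (n-1) (j-1) * fc n i"
  using FF_fun[of n i j] by (simp add: fc_def mk_mult)

lemma FS1_r: "1 \<le> n \<Longrightarrow> k = i \<or> k + 1 = i \<Longrightarrow> i \<le> n \<Longrightarrow> fc n i * dg (n-1) k = 1"
  using FS1_fun[of k i "n-1"] by (simp add: fc_def dg_def mk_mult mk_id)

lemma FS2_r: "2 \<le> n \<Longrightarrow> i < k \<Longrightarrow> k \<le> n \<Longrightarrow> 1 \<le> i \<or> k \<le> n - 1 \<Longrightarrow>
    fc n i * dg (n-1) k = dg (n-2) (k-1) * fc (n-1) i"
  using FS2_fun[of "n-1" i k] by (simp add: fc_def dg_def mk_mult diff_diff_add numeral_2_eq_2)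

lemma FS3_r: "2 \<le> n \<Longrightarrow> k + 1 < i \<Longrightarrow> i \<le> n \<Longrightarrow>
    fc n i * dg (n-1) k = dg (n-2) k * fc (n-1) (i-1)"
  using FS3_fun[of "n-1" k i] by (simp add: fc_def dg_def mk_mult diff_diff_add numeral_2_eq_2)

lemma SS1_r: "1 \<le> n \<Longrightarrow> k \<le> j \<Longrightarrow> j \<le> n \<Longrightarrow> dg n k * dg (n-1) j = dg n (j+1) * dg (n-1) k"
  using SS1_fun[of n k j] by (simp add: dg_def mk_mult)

lemma SS2_r: "1 \<le> n \<Longrightarrow> j < k \<Longrightarrow> k \<le> n + 1 \<Longrightarrow> dg n k * dg (n-1) j = dg n j * dg (n-1) (k-1)"
  using SS2_fun[of n j k] by (simp add: dg_def mk_mult)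

lemma T0_r: "fc (n+1) 0 * dg n (n+1) = tt"
  using T0_fun[of n] by (simp add: fc_def dg_def tt_def mk_mult)

lemma TF_r: "j \<le> n \<Longrightarrow> fc (n+1) j * tt = tt * fc (n+1) (j+1)"
  using TF_fun[of j n] by (simp add: fc_def tt_def mk_mult)

lemma TF2_r: "fc (n+1) (n+1) * tt = fc (n+1) 0"
  using TF2_fun[of n] by (simp add: fc_def tt_def mk_mult)

lemma TS_r: "1 \<le> j \<Longrightarrow> j \<le> n \<Longrightarrow> tt * dg (n-1) j = dg (n-1) (j-1) * tt"
  using TS_fun[of j n] by (simp add: dg_def tt_def mk_mult)

lemma TnF_r: "1 \<le> n \<Longrightarrow> fc n i * TT n = TT (n-1) * fc n i"
  using TnF_fun[of n i] by (simp add: fc_def TT_def mk_mult of_nat_diff)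

lemma TnS_r: "dg n i * TT n = TT (n+1) * dg n i"
  using TnS_fun[of n i] by (simp add: dg_def TT_def mk_mult)

lemma tt_pow: "tt ^ (k + 1) = TT k"
proof (induction k)
  case 0 then show ?case by (simp add: tt_def TT_def)
next
  case (Suc k)
  have "tt ^ (Suc k + 1) = tt * tt ^ (k + 1)" by (metis power_Suc Suc_eq_plus1)
  also have "\<dots> = tt * TT k" using Suc by simp
  also have "\<dots> = TT (Suc k)" by (simp add: tt_def TT_def mk_mult comp_def algebra_simps)
  finally show ?case .
qed



lemma sign_central: "((-1::R) ^ k) * X = X * (-1) ^ k"
  by (cases "even k") auto

definition P :: "nat \<Rightarrow> nat \<Rightarrow> R" where "P n j = 1 - dg (n-1) (j-1) * fc n j"

fun NN :: "nat \<Rightarrow> nat \<Rightarrow> R" where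
  "NN n 0 = 1"
| "NN n (Suc k) = NN n k * P n (Suc k)"

definition Nn :: "nat \<Rightarrow> R" where "Nn n = NN n n"

lemma A1: assumes "1 \<le> j" "j < i" "i \<le> n"
  shows "fc n i * P n j = P (n-1) j * fc n i"
proof -
  have n2: "2 \<le> n" using assms by simp
  have "fc n i * P n j = fc n i - fc n i * dg (n-1) (j-1) * fc n j"
    unfolding P_def by (simp add: algebra_simps)
  also have "fc n i * dg (n-1) (j-1) = dg (n-2) (j-1) * fc (n-1) (i-1)"
    using FS3_r[OF n2, of "j-1" i] assms by simp
  also have "dg (n-2) (j-1) * fc (n-1) (i-1) * fc n j = dg (n-2) (j-1) * (fc (n-1) (i-1) * fc n j)"
    by (simp add: mult.assoc)
  also have "fc (n-1) (i-1) * fc n j = fc (n-1) j * fc n i"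
    using FF_r[OF n2, of j i] assms by simp
  finally show ?thesis unfolding P_def
    by (simp add: algebra_simps diff_diff_add numeral_2_eq_2)
qed

lemma A2: assumes "1 \<le> i" "i \<le> n" shows "fc n i * P n i = 0"
proof -
  have "fc n i * P n i = fc n i - (fc n i * dg (n-1) (i-1)) * fc n i"
    unfolding P_def by (simp add: algebra_simps)
  also have "fc n i * dg (n-1) (i-1) = 1" using FS1_r[of n "i-1" i] assms by simp
  finally show ?thesis by simp
qed

lemma A3: "k < i \<Longrightarrow> i \<le> n \<Longrightarrow> fc n i * NN n k = NN (n-1) k * fc n i"
proof (induction k)
  case 0 then show ?case by simp
next
  case (Suc k)
  have "fc n i * NN n (Suc k) = (fc n i * NN n k) * P n (Suc k)" by (simp add: mult.assoc)
  also have "\<dots> = NN (n-1) k * (fc n i * P n (Suc k))" using Suc by (simp add: mult.assoc)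
  also have "fc n i * P n (Suc k) = P (n-1) (Suc k) * fc n i" using A1[of "Suc k" i n] Suc by simp
  finally show ?case by (simp add: mult.assoc)
qed

lemma A4: "1 \<le> i \<Longrightarrow> i \<le> k \<Longrightarrow> k \<le> n \<Longrightarrow> fc n i * NN n k = 0"
proof (induction k)
  case 0 then show ?case by simp
next
  case (Suc k)
  show ?case
  proof (cases "i = Suc k")
    case True
    have "fc n i * NN n (Suc k) = (fc n i * NN n k) * P n i" using True by (simp add: mult.assoc)
    also have "\<dots> = NN (n-1) k * (fc n i * P n i)" using A3[of k i n] True Suc by (simp add: mult.assoc)
    also have "\<dots> = 0" using A2[of i n] Suc by simp
    finally show ?thesis .
  next
    case False
    then have "fc n i * NN n k = 0" using Suc by simp
    then show ?thesis by (simp add: mult.assoc[symmetric])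
  qed
qed

lemma AN: "1 \<le> i \<Longrightarrow> i \<le> n \<Longrightarrow> fc n i * Nn n = 0"
  unfolding Nn_def by (rule A4) auto

lemma B1: assumes "j + 1 \<le> n" shows "P n (j+1) * dg (n-1) j = 0"
proof -
  have "P n (j+1) * dg (n-1) j = dg (n-1) j - dg (n-1) j * (fc n (j+1) * dg (n-1) j)"
    unfolding P_def by (simp add: algebra_simps)
  also have "fc n (j+1) * dg (n-1) j = 1" using FS1_r[of n j "j+1"] assms by simp
  finally show ?thesis by simp
qed

lemma B2: assumes "j + 1 < k" "k \<le> n"
  shows "P n k * dg (n-1) j = dg (n-1) j * P (n-1) (k-1)"
proof -
  have n2: "2 \<le> n" using assms by simp
  have "P n k * dg (n-1) j = dg (n-1) j - dg (n-1) (k-1) * (fc n k * dg (n-1) j)"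
    unfolding P_def by (simp add: algebra_simps)
  also have "fc n k * dg (n-1) j = dg (n-2) j * fc (n-1) (k-1)"
    using FS3_r[OF n2, of j k] assms by simp
  also have "dg (n-1) (k-1) * (dg (n-2) j * fc (n-1) (k-1)) = (dg (n-1) (k-1) * dg (n-2) j) * fc (n-1) (k-1)"
    by (simp add: mult.assoc)
  also have "dg (n-1) (k-1) * dg (n-2) j = dg (n-1) j * dg (n-2) (k-2)"
    using SS2_r[of "n-1" j "k-1"] assms by (simp add: numeral_2_eq_2 diff_diff_add)
  finally show ?thesis unfolding P_def
    by (simp add: algebra_simps numeral_2_eq_2 diff_diff_add)
qed

lemma B3: "j < k \<Longrightarrow> k \<le> n \<Longrightarrow> NN n k * dg (n-1) j = 0"
proof (induction k)
  case 0 then show ?case by simp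
next
  case (Suc k)
  show ?case
  proof (cases "j = k")
    case True
    have "NN n (Suc k) * dg (n-1) j = NN n k * (P n (j+1) * dg (n-1) j)" using True by (simp add: mult.assoc)
    also have "\<dots> = 0" using B1[of j n] Suc True by simp
    finally show ?thesis .
  next
    case False
    have jk: "j < k" using Suc False by simp
    have "NN n (Suc k) * dg (n-1) j = NN n k * (P n (Suc k) * dg (n-1) j)" by (simp add: mult.assoc)
    also have "P n (Suc k) * dg (n-1) j = dg (n-1) j * P (n-1) k" using B2[of j "Suc k" n] Suc jk by simp
    also have "NN n k * (dg (n-1) j * P (n-1) k) = (NN n k * dg (n-1) j) * P (n-1) k" by (simp add: mult.assoc)
    also have "NN n k * dg (n-1) j = 0" using Suc.IH jk Suc.prems by simp
    finally show ?thesis by simp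
  qed
qed

lemma BN: "j < n \<Longrightarrow> Nn n * dg (n-1) j = 0"
  unfolding Nn_def by (rule B3) auto

lemma C: "(\<And>i. 1 \<le> i \<Longrightarrow> i \<le> n \<Longrightarrow> fc n i * Y = 0) \<Longrightarrow> k \<le> n \<Longrightarrow> NN n k * Y = Y"
proof (induction k)
  case 0 then show ?case by simp
next
  case (Suc k)
  have "P n (Suc k) * Y = Y - dg (n-1) k * (fc n (Suc k) * Y)"
    unfolding P_def by (simp add: algebra_simps)
  also have "fc n (Suc k) * Y = 0" using Suc by simp
  finally have PY: "P n (Suc k) * Y = Y" by simp
  have "NN n (Suc k) * Y = NN n k * (P n (Suc k) * Y)" by (simp add: mult.assoc)
  then show ?case using PY Suc by simp
qed

lemma CN: "(\<And>i. 1 \<le> i \<Longrightarrow> i \<le> n \<Longrightarrow> fc n i * Y = 0) \<Longrightarrow> Nn n * Y = Y"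
  unfolding Nn_def by (rule C) auto

inductive ds :: "nat \<Rightarrow> nat set \<Rightarrow> R \<Rightarrow> bool" for l A where
  ds0: "ds l A 0"
| dsS: "j \<in> A \<Longrightarrow> ds l A X \<Longrightarrow> ds l A (dg l j * Y + X)"

lemma ds_add: "ds l A X \<Longrightarrow> ds l A Z \<Longrightarrow> ds l A (X + Z)"
proof (induction rule: ds.induct)
  case ds0 then show ?case by simp
next
  case (dsS j X Y)
  then have "ds l A (dg l j * Y + (X + Z))" by (intro ds.dsS) auto
  then show ?case by (simp add: add.assoc)
qed

lemma ds_neg: "ds l A X \<Longrightarrow> ds l A (- X)"
proof (induction rule: ds.induct)
  case ds0 then show ?case by (simp add: ds.intros)
next
  case (dsS j X Y)
  have e: "- (dg l j * Y + X) = dg l j * (- Y) + (- X)" by simp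
  have "ds l A (dg l j * (- Y) + (- X))" using dsS by (intro ds.dsS) auto
  then show ?case unfolding e .
qed

lemma ds_diff: "ds l A X \<Longrightarrow> ds l A Z \<Longrightarrow> ds l A (X - Z)"
  using ds_add[of l A X "- Z"] ds_neg[of l A Z] by simp

lemma ds_multr: "ds l A X \<Longrightarrow> ds l A (X * Z)"
proof (induction rule: ds.induct)
  case ds0 then show ?case by (simp add: ds.intros)
next
  case (dsS j X Y)
  have e: "(dg l j * Y + X) * Z = dg l j * (Y * Z) + X * Z" by (simp add: algebra_simps)
  have "ds l A (dg l j * (Y * Z) + X * Z)" using dsS by (intro ds.dsS) auto
  then show ?case unfolding e .
qed

lemma ds_mono: "ds l A X \<Longrightarrow> A \<subseteq> A' \<Longrightarrow> ds l A' X"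
proof (induction rule: ds.induct)
  case ds0 then show ?case by (simp add: ds.intros)
next
  case (dsS j X Y)
  then show ?case by (intro ds.dsS) auto
qed

lemma ds_single: "j \<in> A \<Longrightarrow> ds l A (dg l j * Y)"
  using dsS[of j A l 0 Y] ds0 by simp

lemma ds_kill: "ds l A X \<Longrightarrow> (\<And>j. j \<in> A \<Longrightarrow> L * dg l j = 0) \<Longrightarrow> L * X = 0"
proof (induction rule: ds.induct)
  case ds0 then show ?case by simp
next
  case (dsS j X Y)
  have "L * (dg l j * Y + X) = (L * dg l j) * Y + L * X" by (simp add: algebra_simps)
  then show ?case using dsS by simp
qed

lemma ds_left: "ds l A X \<Longrightarrow> (\<And>j Y. j \<in> A \<Longrightarrow> ds m B (L * (dg l j * Y))) \<Longrightarrow> ds m B (L * X)"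
proof (induction rule: ds.induct)
  case ds0 then show ?case by (simp add: ds.intros)
next
  case (dsS j X Y)
  then show ?case by (simp add: distrib_left ds_add)
qed

lemma ds_sign: "ds l A X \<Longrightarrow> ds l A ((-1) ^ k * X)"
  by (cases "even k") (auto intro: ds_neg)

lemma NN_ds: "k \<le> n \<Longrightarrow> ds (n-1) {..<k} (1 - NN n k)"
proof (induction k)
  case 0 then show ?case by (simp add: ds.intros)
next
  case (Suc k)
  define X where "X = 1 - NN n k"
  have NNk: "NN n k = 1 - X" unfolding X_def by simp
  have X: "ds (n-1) {..<Suc k} X" using Suc ds_mono[of "n-1" "{..<k}" X "{..<Suc k}"] unfolding X_def by auto
  have D: "ds (n-1) {..<Suc k} (dg (n-1) k * fc n (Suc k))" by (rule ds_single) simp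
  have "1 - NN n (Suc k) = X + dg (n-1) k * fc n (Suc k) - X * (dg (n-1) k * fc n (Suc k))"
    by (simp add: NNk P_def algebra_simps)
  then show ?case using X D by (simp add: ds_add ds_diff ds_multr)
qed

lemma Nn_ds: "ds (n-1) {..<n} (1 - Nn n)"
  unfolding Nn_def by (rule NN_ds) simp



definition B :: "nat \<Rightarrow> R" where "B n = (\<Sum>i\<le>n. (-1) ^ i * fc n i)"
definition Dd :: "nat \<Rightarrow> R" where "Dd n = (\<Sum>i\<le>n+1. (-1) ^ i * dg n i)"

lemma sgn3: "L * ((-1::R) ^ i * X) * M = (-1) ^ i * (L * (X * M))"
  by (cases "even i") (auto simp: mult.assoc)

lemma sgn2l: "L * ((-1::R) ^ i * X) = (-1) ^ i * (L * X)"
  by (cases "even i") auto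

lemma sgn2r: "((-1::R) ^ i * X) * M = (-1) ^ i * (X * M)"
  by (cases "even i") auto

lemma sum_pm:
  assumes "j + 1 \<le> m"
  shows "(\<Sum>i\<le>m. (-1) ^ i * (if i = j \<or> i = j + 1 then X else 0)) = (0::R)"
proof -
  have "(\<Sum>i\<le>m. (-1) ^ i * (if i = j \<or> i = j + 1 then X else 0))
      = (\<Sum>i\<le>m. (if i = j then (-1) ^ j * X else 0) + (if i = j + 1 then (-1) ^ (j+1) * X else 0))"
    by (rule sum.cong) auto
  also have "\<dots> = (-1) ^ j * X + (-1) ^ (j+1) * X"
    using assms by (simp add: sum.distrib)
  also have "\<dots> = 0" by simp
  finally show ?thesis .
qed

lemma BN2: "j + 2 \<le> n \<Longrightarrow> Nn (n-1) * dg (n-2) j = 0"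
  using BN[of j "n-1"] by (simp add: diff_diff_add numeral_2_eq_2)




lemma D_comm:
  assumes n1: "1 \<le> n"
  shows "B n * Nn n = Nn (n-1) * B n"
proof -
  have D1: "B n * Nn n = fc n 0 * Nn n"
  proof -
    have "B n * Nn n = (\<Sum>i\<le>n. (-1) ^ i * (fc n i * Nn n))"
      unfolding B_def by (simp add: sum_distrib_right mult.assoc)
    also have "\<dots> = (\<Sum>i\<le>n. (if i = 0 then fc n 0 * Nn n else 0))"
      by (rule sum.cong) (auto simp: AN)
    also have "\<dots> = fc n 0 * Nn n" by simp
    finally show ?thesis .
  qed
  have K: "fc (n-1) i * (B n * Nn n) = 0" if "1 \<le> i" "i \<le> n-1" for i
  proof -
    have n2: "2 \<le> n" using that by simp
    have "fc (n-1) 0 * fc n (i+1) = fc (n-1) i * fc n 0" using FF_r[OF n2, of 0 "i+1"] that by simp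
    then have "fc (n-1) i * (fc n 0 * Nn n) = fc (n-1) 0 * (fc n (i+1) * Nn n)"
      by (simp add: mult.assoc[symmetric])
    also have "fc n (i+1) * Nn n = 0" using AN[of "i+1" n] that by simp
    finally show ?thesis using D1 by simp
  qed
  have fixN: "Nn (n-1) * (B n * Nn n) = B n * Nn n"
    by (rule CN) (use K in auto)
  have termN: "Nn (n-1) * (fc n i * dg (n-1) j) = (if i = j \<or> i = j + 1 then Nn (n-1) else 0)"
    if "j < n" "i \<le> n" for i j
  proof (cases "i = j \<or> i = j + 1")
    case True
    then have "fc n i * dg (n-1) j = 1" using FS1_r[of n j i] that n1 by auto
    then show ?thesis using True by simp
  next
    case False
    show ?thesis
    proof (cases "i < j")
      case True
      have n2: "2 \<le> n" using True that by simp
      have jn: "j \<le> n - 1" using that by linarith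
      have "fc n i * dg (n-1) j = dg (n-2) (j-1) * fc (n-1) i"
        using FS2_r[OF n2, of i j] True that jn by simp
      moreover have "Nn (n-1) * dg (n-2) (j-1) = 0" using BN2[of "j-1" n] True that by simp
      ultimately show ?thesis using False by (simp add: mult.assoc[symmetric])
    next
      case False2: False
      then have lt: "j + 1 < i" using False by simp
      have n2: "2 \<le> n" using lt that by simp
      have "fc n i * dg (n-1) j = dg (n-2) j * fc (n-1) (i-1)"
        using FS3_r[OF n2, of j i] lt that by simp
      moreover have "Nn (n-1) * dg (n-2) j = 0" using BN2[of j n] lt that by simp
      ultimately show ?thesis using False by (simp add: mult.assoc[symmetric])
    qed
  qed
  have killj: "Nn (n-1) * B n * dg (n-1) j = 0" if "j \<in> {..<n}" for j
  proof -
    have "Nn (n-1) * B n * dg (n-1) j = (\<Sum>i\<le>n. (-1) ^ i * (Nn (n-1) * (fc n i * dg (n-1) j)))"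
      unfolding B_def by (simp add: sum_distrib_left sum_distrib_right sgn3)
    also have "\<dots> = (\<Sum>i\<le>n. (-1) ^ i * (if i = j \<or> i = j + 1 then Nn (n-1) else 0))"
      by (rule sum.cong) (use termN that in auto)
    also have "\<dots> = 0" by (rule sum_pm) (use that in auto)
    finally show ?thesis .
  qed
  have kill: "Nn (n-1) * B n * (1 - Nn n) = 0"
    by (rule ds_kill[OF Nn_ds]) (use killj in auto)
  have "B n * Nn n = Nn (n-1) * B n * Nn n" using fixN by (simp add: mult.assoc)
  also have "\<dots> = Nn (n-1) * B n - Nn (n-1) * B n * (1 - Nn n)" by (simp add: algebra_simps)
  finally show ?thesis using kill by simp
qed




lemma E_comm: "Dd n * Nn n = Nn (n+1) * Dd n"
proof -
  have term1: "fc (n+1) i * (dg n k * Nn n) = (if k = i - 1 \<or> k = i - 1 + 1 then Nn n else 0)"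
    if "1 \<le> i" "i \<le> n + 1" "k \<le> n + 1" for i k
  proof (cases "k = i \<or> k + 1 = i")
    case True
    then have e: "fc (n+1) i * dg n k = 1" using FS1_r[of "n+1" k i] that by auto
    have c: "k = i - 1 \<or> k = i - 1 + 1" using True that by auto
    have "fc (n+1) i * (dg n k * Nn n) = (fc (n+1) i * dg n k) * Nn n" by (simp only: mult.assoc)
    also have "\<dots> = Nn n" by (simp only: e mult_1_left)
    finally show ?thesis using c by simp
  next
    case False
    have c: "\<not> (k = i - 1 \<or> k = i - 1 + 1)" using False that by auto
    show ?thesis
    proof (cases "i < k")
      case True
      have n2: "2 \<le> n + 1" using True that by simp
      have e: "fc (n+1) i * dg n k = dg (n-1) (k-1) * fc n i"
        using FS2_r[OF n2, of i k] True that by simp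
      have z: "fc n i * Nn n = 0" using AN[of i n] True that by simp
      have "fc (n+1) i * (dg n k * Nn n) = (fc (n+1) i * dg n k) * Nn n" by (simp only: mult.assoc)
      also have "\<dots> = dg (n-1) (k-1) * (fc n i * Nn n)" by (simp only: e mult.assoc)
      also have "\<dots> = 0" by (simp only: z mult_zero_right)
      finally show ?thesis using c by simp
    next
      case False2: False
      then have lt: "k + 1 < i" using False by simp
      have n2: "2 \<le> n + 1" using lt that by simp
      have e: "fc (n+1) i * dg n k = dg (n-1) k * fc n (i-1)"
        using FS3_r[OF n2, of k i] lt that by simp
      have z: "fc n (i-1) * Nn n = 0" using AN[of "i-1" n] lt that by simp
      have "fc (n+1) i * (dg n k * Nn n) = (fc (n+1) i * dg n k) * Nn n" by (simp only: mult.assoc)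
      also have "\<dots> = dg (n-1) k * (fc n (i-1) * Nn n)" by (simp only: e mult.assoc)
      also have "\<dots> = 0" by (simp only: z mult_zero_right)
      finally show ?thesis using c by simp
    qed
  qed
  have K: "fc (n+1) i * (Dd n * Nn n) = 0" if "1 \<le> i" "i \<le> n+1" for i
  proof -
    have "fc (n+1) i * (Dd n * Nn n) = (\<Sum>k\<le>n+1. (-1) ^ k * (fc (n+1) i * (dg n k * Nn n)))"
      unfolding Dd_def by (simp add: sum_distrib_left sum_distrib_right sgn2l sgn2r mult.assoc del: sum.atMost_Suc)
    also have "\<dots> = (\<Sum>k\<le>n+1. (-1) ^ k * (if k = i - 1 \<or> k = i - 1 + 1 then Nn n else 0))"
      by (rule sum.cong) (use term1 that in auto)
    also have "\<dots> = 0" by (rule sum_pm) (use that in auto)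
    finally show ?thesis .
  qed
  have fixN: "Nn (n+1) * (Dd n * Nn n) = Dd n * Nn n"
    by (rule CN) (use K in auto)
  have term2: "Nn (n+1) * (dg n k * dg (n-1) j) = 0" if "j < n" "k \<le> n + 1" for j k
  proof (cases "k \<le> j")
    case True
    have "dg n k * dg (n-1) j = dg n (j+1) * dg (n-1) k" using SS1_r[of n k j] True that by simp
    moreover have "Nn (n+1) * dg n (j+1) = 0" using BN[of "j+1" "n+1"] that by simp
    ultimately show ?thesis by (simp add: mult.assoc[symmetric])
  next
    case False
    have "dg n k * dg (n-1) j = dg n j * dg (n-1) (k-1)" using SS2_r[of n j k] False that by simp
    moreover have "Nn (n+1) * dg n j = 0" using BN[of j "n+1"] that by simp
    ultimately show ?thesis by (simp add: mult.assoc[symmetric])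
  qed
  have killj: "Nn (n+1) * Dd n * dg (n-1) j = 0" if "j \<in> {..<n}" for j
  proof -
    have "Nn (n+1) * Dd n * dg (n-1) j = (\<Sum>k\<le>n+1. (-1) ^ k * (Nn (n+1) * (dg n k * dg (n-1) j)))"
      unfolding Dd_def by (simp add: sum_distrib_left sum_distrib_right sgn3 del: sum.atMost_Suc)
    also have "\<dots> = 0"
      by (rule sum.neutral) (use term2 that in auto)
    finally show ?thesis .
  qed
  have kill: "Nn (n+1) * Dd n * (1 - Nn n) = 0"
    by (rule ds_kill[OF Nn_ds]) (use killj in auto)
  have "Dd n * Nn n = Nn (n+1) * Dd n * Nn n" using fixN by (simp add: mult.assoc)
  also have "\<dots> = Nn (n+1) * Dd n - Nn (n+1) * Dd n * (1 - Nn n)" by (simp add: algebra_simps)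
  finally show ?thesis using kill by simp
qed




lemma F_comm: "1 \<le> n \<Longrightarrow> B n * TT n = TT (n-1) * B n"
  unfolding B_def
  by (simp add: sum_distrib_left sum_distrib_right sgn2l sgn2r TnF_r)

lemma F_comm2: "Dd n * TT n = TT (n+1) * Dd n"
  unfolding Dd_def sum_distrib_left sum_distrib_right
  by (rule sum.cong) (simp_all add: sgn2l sgn2r TnS_r)



definition K' :: "nat \<Rightarrow> R" where "K' m = tt - dg (m-1) m * fc m 0"

lemma G0: assumes "1 \<le> j" "j \<le> n"
  shows "fc (n+1) j * K' (n+1) = K' n * fc (n+1) (j+1)"
proof -
  have n2: "2 \<le> n + 1" using assms by simp
  have e1: "fc (n+1) j * tt = tt * fc (n+1) (j+1)" using TF_r[of j n] assms by simp
  have e2: "fc (n+1) j * dg n (n+1) = dg (n-1) n * fc n j"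
    using FS2_r[OF n2, of j "n+1"] assms by simp
  have e3: "fc n j * fc (n+1) 0 = fc n 0 * fc (n+1) (j+1)"
    using FF_r[OF n2, of 0 "j+1"] assms by simp
  have "fc (n+1) j * K' (n+1) = fc (n+1) j * tt - (fc (n+1) j * dg n (n+1)) * fc (n+1) 0"
    unfolding K'_def by (simp add: algebra_simps)
  also have "\<dots> = tt * fc (n+1) (j+1) - dg (n-1) n * (fc n j * fc (n+1) 0)"
    by (simp only: e1 e2 mult.assoc)
  also have "\<dots> = K' n * fc (n+1) (j+1)"
    unfolding e3 K'_def by (simp add: algebra_simps)
  finally show ?thesis .
qed

lemma G0': "fc (n+1) (n+1) * K' (n+1) = 0"
proof -
  have e: "fc (n+1) (n+1) * dg n (n+1) = 1" using FS1_r[of "n+1" "n+1" "n+1"] by simp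
  have "fc (n+1) (n+1) * K' (n+1) = fc (n+1) (n+1) * tt - (fc (n+1) (n+1) * dg n (n+1)) * fc (n+1) 0"
    unfolding K'_def by (simp add: algebra_simps)
  also have "\<dots> = fc (n+1) 0 - 1 * fc (n+1) 0" by (simp only: e TF2_r)
  finally show ?thesis by simp
qed

lemma G1: "1 \<le> j \<Longrightarrow> j + k \<le> n + 1 \<Longrightarrow> fc (n+1) j * K' (n+1) ^ k = K' n ^ k * fc (n+1) (j + k)"
proof (induction k arbitrary: j)
  case 0 then show ?case by simp
next
  case (Suc k)
  have "fc (n+1) j * K' (n+1) ^ Suc k = (fc (n+1) j * K' (n+1)) * K' (n+1) ^ k"
    by (simp add: mult.assoc)
  also have "\<dots> = K' n * (fc (n+1) (j+1) * K' (n+1) ^ k)"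
    using G0[of j n] Suc.prems by (simp add: mult.assoc)
  also have "fc (n+1) (j+1) * K' (n+1) ^ k = K' n ^ k * fc (n+1) (j + 1 + k)"
    using Suc.IH[of "j+1"] Suc.prems by simp
  finally show ?case by (simp add: mult.assoc)
qed

lemma G2: assumes "1 \<le> j" "j \<le> n + 1" "n + 1 < j + k"
  shows "fc (n+1) j * K' (n+1) ^ k = 0"
proof -
  define a where "a = n + 1 - j"
  define r where "r = k - a - 1"
  have k: "k = a + Suc r" using assms unfolding a_def r_def by linarith
  have "fc (n+1) j * K' (n+1) ^ k = (fc (n+1) j * K' (n+1) ^ a) * (K' (n+1) * K' (n+1) ^ r)"
    unfolding k power_add power_Suc by (simp only: mult.assoc)
  also have "fc (n+1) j * K' (n+1) ^ a = K' n ^ a * fc (n+1) (n+1)"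
    using G1[of j a n] assms unfolding a_def by simp
  also have "K' n ^ a * fc (n+1) (n+1) * (K' (n+1) * K' (n+1) ^ r)
      = K' n ^ a * (fc (n+1) (n+1) * K' (n+1)) * K' (n+1) ^ r" by (simp add: mult.assoc)
  also have "fc (n+1) (n+1) * K' (n+1) = 0" by (rule G0')
  finally show ?thesis by simp
qed

definition Y :: "nat \<Rightarrow> nat \<Rightarrow> R" where "Y n k = fc (n+1) 0 * K' (n+1) ^ k * dg n (n+1)"
definition Pi' :: "nat \<Rightarrow> R" where "Pi' n = (-1) ^ n * Y n n"

lemma G3: assumes "1 \<le> i" "i \<le> n" shows "fc n i * Pi' n = 0"
proof -
  have n2: "2 \<le> n + 1" using assms by simp
  have e: "fc n i * fc (n+1) 0 = fc n 0 * fc (n+1) (i+1)"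
    using FF_r[OF n2, of 0 "i+1"] assms by simp
  have z: "fc (n+1) (i+1) * K' (n+1) ^ n = 0" using G2[of "i+1" n n] assms by simp
  have "fc n i * Y n n = (fc n i * fc (n+1) 0) * K' (n+1) ^ n * dg n (n+1)"
    unfolding Y_def by (simp only: mult.assoc)
  also have "\<dots> = fc n 0 * (fc (n+1) (i+1) * K' (n+1) ^ n) * dg n (n+1)"
    unfolding e by (simp only: mult.assoc)
  finally have "fc n i * Y n n = fc n 0 * (fc (n+1) (i+1) * K' (n+1) ^ n) * dg n (n+1)" .
  then have "fc n i * Y n n = 0" using z by simp
  then show ?thesis unfolding Pi'_def by (simp add: sgn2l)
qed

lemma KS: assumes "1 \<le> j" "j < n"
  shows "K' n * dg (n-1) j = dg (n-1) (j-1) * K' (n-1)"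
proof -
  have n2: "2 \<le> n" using assms by simp
  have e1: "tt * dg (n-1) j = dg (n-1) (j-1) * tt" using TS_r[of j n] assms by simp
  have e2: "fc n 0 * dg (n-1) j = dg (n-2) (j-1) * fc (n-1) 0"
    using FS2_r[OF n2, of 0 j] assms by simp
  have e3: "dg (n-1) n * dg (n-2) (j-1) = dg (n-1) (j-1) * dg (n-2) (n-1)"
    using SS2_r[of "n-1" "j-1" n] assms by (simp add: numeral_2_eq_2 diff_diff_add)
  have "K' n * dg (n-1) j = tt * dg (n-1) j - dg (n-1) n * (fc n 0 * dg (n-1) j)"
    unfolding K'_def by (simp add: algebra_simps)
  also have "\<dots> = dg (n-1) (j-1) * tt - (dg (n-1) n * dg (n-2) (j-1)) * fc (n-1) 0"
    by (simp only: e1 e2 mult.assoc)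
  also have "\<dots> = dg (n-1) (j-1) * K' (n-1)"
    unfolding e3 K'_def by (simp add: algebra_simps numeral_2_eq_2 diff_diff_add)
  finally show ?thesis .
qed

lemma KSn: assumes "1 \<le> n"
  shows "K' n * dg (n-1) n = dg (n-1) (n-1) * tt - dg (n-1) n * tt"
proof -
  have e1: "tt * dg (n-1) n = dg (n-1) (n-1) * tt" using TS_r[of n n] assms by simp
  have e2: "fc n 0 * dg (n-1) n = tt" using T0_r[of "n-1"] assms by simp
  have "K' n * dg (n-1) n = tt * dg (n-1) n - dg (n-1) n * (fc n 0 * dg (n-1) n)"
    unfolding K'_def by (simp add: algebra_simps)
  then show ?thesis by (simp only: e1 e2)
qed

definition W :: "nat \<Rightarrow> nat \<Rightarrow> R" where "W n k = K' n ^ k * dg (n-1) n"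

lemma G4: "k \<le> n \<Longrightarrow> ds (n-1) {n-k..n} (W n k)"
proof (induction k)
  case 0 then show ?case unfolding W_def using ds_single[of n "{n..n}" "n-1" 1] by simp
next
  case (Suc k)
  have IH: "ds (n-1) {n-k..n} (W n k)" using Suc by simp
  have "ds (n-1) {n - Suc k..n} (K' n * W n k)"
  proof (rule ds_left[OF IH])
    fix j Z assume j: "j \<in> {n-k..n}"
    show "ds (n-1) {n - Suc k..n} (K' n * (dg (n-1) j * Z))"
    proof (cases "j < n")
      case True
      have "K' n * (dg (n-1) j * Z) = dg (n-1) (j-1) * (K' (n-1) * Z)"
        using KS[of j n] True j Suc.prems by (simp add: mult.assoc[symmetric])
      moreover have "j - 1 \<in> {n - Suc k..n}" using j Suc.prems True by auto
      ultimately show ?thesis by (simp add: ds_single)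
    next
      case False
      then have jn: "j = n" using j by simp
      have "K' n * (dg (n-1) j * Z) = (K' n * dg (n-1) n) * Z" using jn by (simp only: mult.assoc)
      also have "\<dots> = (dg (n-1) (n-1) * tt - dg (n-1) n * tt) * Z" using KSn[of n] Suc.prems by simp
      also have "\<dots> = dg (n-1) (n-1) * (tt * Z) - dg (n-1) n * (tt * Z)" by (simp add: algebra_simps)
      finally have "K' n * (dg (n-1) j * Z) = dg (n-1) (n-1) * (tt * Z) - dg (n-1) n * (tt * Z)" .
      moreover have "ds (n-1) {n - Suc k..n} (dg (n-1) (n-1) * (tt * Z))"
        by (rule ds_single) (use Suc.prems in auto)
      moreover have "ds (n-1) {n - Suc k..n} (dg (n-1) n * (tt * Z))"
        by (rule ds_single) (use Suc.prems in auto)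
      ultimately show ?thesis by (simp add: ds_diff)
    qed
  qed
  moreover have "K' n * W n k = W n (Suc k)" unfolding W_def by (simp add: mult.assoc)
  ultimately show ?case by simp
qed

lemma tt_ds: "ds (n-1) A X \<Longrightarrow> (\<And>j. j \<in> A \<Longrightarrow> 1 \<le> j \<and> j \<le> n \<and> j - 1 \<in> A') \<Longrightarrow> ds (n-1) A' (tt * X)"
proof (rule ds_left)
  fix j Z assume "ds (n-1) A X" and h: "\<And>j. j \<in> A \<Longrightarrow> 1 \<le> j \<and> j \<le> n \<and> j - 1 \<in> A'" and j: "j \<in> A"
  have "tt * (dg (n-1) j * Z) = dg (n-1) (j-1) * (tt * Z)"
    using TS_r[of j n] h[OF j] by (simp add: mult.assoc[symmetric])
  then show "ds (n-1) A' (tt * (dg (n-1) j * Z))" using h[OF j] by (simp add: ds_single)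
qed

lemma G5: "k \<le> n \<Longrightarrow> ds (n-1) {n-k..<n} (Y n k - (-1) ^ k * tt ^ (k+1))"
proof (induction k)
  case 0
  have "Y n 0 = tt" unfolding Y_def using T0_r[of n] by simp
  then show ?case by (simp add: ds0)
next
  case (Suc k)
  define D where "D = Y n k - (-1) ^ k * tt ^ (k+1)"
  have D: "ds (n-1) {n-k..<n} D" using Suc unfolding D_def by simp
  have e1: "fc (n+1) 0 * K' (n+1) = tt * fc (n+1) 1 - tt * fc (n+1) 0"
  proof -
    have a: "fc (n+1) 0 * tt = tt * fc (n+1) 1" using TF_r[of 0 n] by simp
    have b: "fc (n+1) 0 * dg n (n+1) = tt" using T0_r[of n] by simp
    have "fc (n+1) 0 * K' (n+1) = fc (n+1) 0 * tt - (fc (n+1) 0 * dg n (n+1)) * fc (n+1) 0"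
      unfolding K'_def by (simp add: algebra_simps)
    then show ?thesis by (simp only: a b)
  qed
  have e2: "fc (n+1) 1 * K' (n+1) ^ k = K' n ^ k * fc (n+1) (1 + k)"
    using G1[of 1 k n] Suc.prems by simp
  have n2: "2 \<le> n + 1" using Suc.prems by simp
  have e3: "fc (n+1) (1 + k) * dg n (n+1) = dg (n-1) n * fc n (k+1)"
    using FS2_r[OF n2, of "1+k" "n+1"] Suc.prems by simp
  have "Y n (Suc k) = (fc (n+1) 0 * K' (n+1)) * K' (n+1) ^ k * dg n (n+1)"
    unfolding Y_def by (simp add: mult.assoc)
  also have "\<dots> = tt * ((fc (n+1) 1 * K' (n+1) ^ k) * dg n (n+1)) - tt * Y n k"
    unfolding e1 Y_def by (simp only: algebra_simps)
  also have "(fc (n+1) 1 * K' (n+1) ^ k) * dg n (n+1) = W n k * fc n (k+1)"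
    unfolding e2 W_def by (simp only: mult.assoc e3)
  finally have YS: "Y n (Suc k) = tt * (W n k * fc n (k+1)) - tt * Y n k" .
  have Yk: "Y n k = D + (-1) ^ k * tt ^ (k+1)" unfolding D_def by simp
  have "Y n (Suc k) - (-1) ^ Suc k * tt ^ (Suc k + 1) = tt * (W n k * fc n (k+1)) - tt * D"
    unfolding YS Yk by (simp add: algebra_simps sgn2l)
  moreover have "ds (n-1) {n - Suc k..<n} (tt * (W n k * fc n (k+1)))"
  proof (rule tt_ds)
    show "ds (n-1) {n-k..n} (W n k * fc n (k+1))" using G4[of k n] Suc.prems by (simp add: ds_multr)
    fix j assume "j \<in> {n-k..n}"
    then show "1 \<le> j \<and> j \<le> n \<and> j - 1 \<in> {n - Suc k..<n}" using Suc.prems by auto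
  qed
  moreover have "ds (n-1) {n - Suc k..<n} (tt * D)"
  proof (rule tt_ds[OF D])
    fix j assume "j \<in> {n-k..<n}"
    then show "1 \<le> j \<and> j \<le> n \<and> j - 1 \<in> {n - Suc k..<n}" using Suc.prems by auto
  qed
  ultimately show ?case by (simp add: ds_diff)
qed

lemma sgn_sq: "(-1::R) ^ n * ((-1) ^ n * X) = X"
  by (cases "even n") auto

lemma G6: "Pi' n = Nn n * TT n"
proof -
  have fixP: "Nn n * Pi' n = Pi' n" by (rule CN) (simp add: G3)
  have "ds (n-1) {0..<n} (Y n n - (-1) ^ n * tt ^ (n+1))" using G5[of n n] by simp
  then have "ds (n-1) {0..<n} ((-1) ^ n * (Y n n - (-1) ^ n * tt ^ (n+1)))" by (rule ds_sign)
  moreover have "(-1) ^ n * (Y n n - (-1) ^ n * tt ^ (n+1)) = Pi' n - TT n"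
    unfolding Pi'_def tt_pow by (simp add: right_diff_distrib sgn_sq)
  ultimately have "ds (n-1) {0..<n} (Pi' n - TT n)" by simp
  then have "Nn n * (Pi' n - TT n) = 0" by (rule ds_kill) (rule BN, simp)
  then show ?thesis using fixP by (simp add: algebra_simps)
qed

theorem ring_b: "1 \<le> n \<Longrightarrow> B n * Pi' n = Pi' (n-1) * B n"
  by (simp add: G6 mult.assoc[symmetric] D_comm) (simp add: mult.assoc F_comm)

theorem ring_d: "Dd n * Pi' n = Pi' (n+1) * Dd n"
  by (simp add: G6 mult.assoc[symmetric] E_comm) (simp add: mult.assoc F_comm2)



definition HG :: "('o, 'm) preadd_cat \<Rightarrow> 'o \<Rightarrow> 'o \<Rightarrow> 'm monoid" where
  "HG C a b = \<lparr>carrier = Hom C a b, monoid.mult = pls C a b, one = zer C a b\<rparr>"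

lemma HG_simps [simp]:
  "carrier (HG C a b) = Hom C a b" "monoid.mult (HG C a b) = pls C a b" "one (HG C a b) = zer C a b"
  by (simp_all add: HG_def)

context
  fixes C :: "('o, 'm) preadd_cat"
  assumes PA: "preadditive C"
begin

lemma pa_zer: "a \<in> Ob C \<Longrightarrow> b \<in> Ob C \<Longrightarrow> zer C a b \<in> Hom C a b"
  using PA unfolding preadditive_def by blast
lemma pa_pls: "a \<in> Ob C \<Longrightarrow> b \<in> Ob C \<Longrightarrow> f \<in> Hom C a b \<Longrightarrow> g \<in> Hom C a b \<Longrightarrow> pls C a b f g \<in> Hom C a b"
  using PA unfolding preadditive_def by blast
lemma pa_ng: "a \<in> Ob C \<Longrightarrow> b \<in> Ob C \<Longrightarrow> f \<in> Hom C a b \<Longrightarrow> ng C a b f \<in> Hom C a b"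
  using PA unfolding preadditive_def by blast
lemma pa_assoc: "a \<in> Ob C \<Longrightarrow> b \<in> Ob C \<Longrightarrow> f \<in> Hom C a b \<Longrightarrow> g \<in> Hom C a b \<Longrightarrow> h \<in> Hom C a b \<Longrightarrow>
    pls C a b (pls C a b f g) h = pls C a b f (pls C a b g h)"
  using PA unfolding preadditive_def by blast
lemma pa_comm: "a \<in> Ob C \<Longrightarrow> b \<in> Ob C \<Longrightarrow> f \<in> Hom C a b \<Longrightarrow> g \<in> Hom C a b \<Longrightarrow> pls C a b f g = pls C a b g f"
  using PA unfolding preadditive_def by blast
lemma pa_lid: "a \<in> Ob C \<Longrightarrow> b \<in> Ob C \<Longrightarrow> f \<in> Hom C a b \<Longrightarrow> pls C a b (zer C a b) f = f"
  using PA unfolding preadditive_def by blast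
lemma pa_linv: "a \<in> Ob C \<Longrightarrow> b \<in> Ob C \<Longrightarrow> f \<in> Hom C a b \<Longrightarrow> pls C a b (ng C a b f) f = zer C a b"
  using PA unfolding preadditive_def by blast
lemma pa_cmp: "a \<in> Ob C \<Longrightarrow> b \<in> Ob C \<Longrightarrow> c \<in> Ob C \<Longrightarrow> f \<in> Hom C a b \<Longrightarrow> g \<in> Hom C b c \<Longrightarrow>
    cmp C a b c g f \<in> Hom C a c"
proof -
  have "\<forall>a\<in>Ob C. \<forall>b\<in>Ob C. \<forall>c\<in>Ob C. \<forall>f\<in>Hom C a b. \<forall>g\<in>Hom C b c. cmp C a b c g f \<in> Hom C a c"
    using PA unfolding preadditive_def by (elim conjE)
  then show "a \<in> Ob C \<Longrightarrow> b \<in> Ob C \<Longrightarrow> c \<in> Ob C \<Longrightarrow> f \<in> Hom C a b \<Longrightarrow> g \<in> Hom C b c \<Longrightarrow> cmp C a b c g f \<in> Hom C a c"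
    by blast
qed
lemma pa_bil_l: "a \<in> Ob C \<Longrightarrow> b \<in> Ob C \<Longrightarrow> c \<in> Ob C \<Longrightarrow> f \<in> Hom C a b \<Longrightarrow> g \<in> Hom C b c \<Longrightarrow> g' \<in> Hom C b c \<Longrightarrow>
    cmp C a b c (pls C b c g g') f = pls C a c (cmp C a b c g f) (cmp C a b c g' f)"
  using PA unfolding preadditive_def by blast
lemma pa_bil_r: "a \<in> Ob C \<Longrightarrow> b \<in> Ob C \<Longrightarrow> c \<in> Ob C \<Longrightarrow> f \<in> Hom C a b \<Longrightarrow> f' \<in> Hom C a b \<Longrightarrow> g \<in> Hom C b c \<Longrightarrow>
    cmp C a b c g (pls C a b f f') = pls C a c (cmp C a b c g f) (cmp C a b c g f')"
  using PA unfolding preadditive_def by blast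

lemma HG_cg:
  assumes "a \<in> Ob C" "b \<in> Ob C"
  shows "comm_group (HG C a b)"
proof (rule comm_groupI)
  fix x assume x: "x \<in> carrier (HG C a b)"
  show "\<exists>y\<in>carrier (HG C a b). y \<otimes>\<^bsub>HG C a b\<^esub> x = \<one>\<^bsub>HG C a b\<^esub>"
    by (rule bexI[of _ "ng C a b x"]) (use x assms pa_ng pa_linv in auto)
qed (use assms pa_zer pa_pls pa_ng pa_assoc pa_comm pa_lid pa_linv in auto)

end

lemma hom_finprod':
  assumes G: "comm_group G" and H: "comm_group H" and h: "h \<in> hom G H"
  shows "f \<in> A \<rightarrow> carrier G \<Longrightarrow> h (finprod G f A) = finprod H (\<lambda>a. h (f a)) A"
proof (induction A rule: infinite_finite_induct)
  case (infinite A)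
  then show ?case using hom_one[OF h] G H by (simp add: comm_group.axioms comm_monoid.finprod_infinite)
next
  case empty
  then show ?case using hom_one[OF h] G H by (simp add: comm_group.axioms comm_monoid.finprod_empty)
next
  case (insert a A)
  interpret G: comm_group G by (rule G)
  interpret H: comm_group H by (rule H)
  interpret hh: group_hom G H h by (simp add: group_hom_def group_hom_axioms_def h G.group_axioms H.group_axioms)
  have fA: "f \<in> A \<rightarrow> carrier G" and fa: "f a \<in> carrier G" using insert by auto
  have hA: "(\<lambda>a. h (f a)) \<in> A \<rightarrow> carrier H" using fA by (auto intro: hh.hom_closed)
  have ha: "h (f a) \<in> carrier H" using fa by (rule hh.hom_closed)
  show ?case using insert fA fa hA ha by simp
qed

locale ctx =
  fixes C :: "('o, 'm) preadd_cat" and Mo :: "nat \<Rightarrow> 'o" and Mm :: "nat \<Rightarrow> nat \<Rightarrow> (int \<Rightarrow> int) \<Rightarrow> 'm"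
  assumes PA: "preadditive C" and DU: "duplicial C Mo Mm"
begin

abbreviation G :: "nat \<Rightarrow> nat \<Rightarrow> 'm monoid" where "G m n \<equiv> HG C (Mo n) (Mo m)"

lemma ob: "Mo n \<in> Ob C" using DU unfolding duplicial_def by simp

lemma cg: "comm_group (G m n)" using HG_cg[OF PA ob ob] .

lemma grp: "group (G m n)" using cg comm_group.axioms(2) by blast

lemma mmh: "f \<in> lam_hom m n \<Longrightarrow> Mm m n f \<in> carrier (G m n)"
  using DU unfolding duplicial_def by simp

lemma mm_id: "Mm n n id = idm C (Mo n)" using DU unfolding duplicial_def by simp

lemma mm_comp: "f \<in> lam_hom l m \<Longrightarrow> g \<in> lam_hom m n \<Longrightarrow>
    Mm l n (g \<circ> f) = cmp C (Mo n) (Mo m) (Mo l) (Mm l m f) (Mm m n g)"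
  using DU unfolding duplicial_def by blast

abbreviation cm :: "nat \<Rightarrow> nat \<Rightarrow> nat \<Rightarrow> 'm \<Rightarrow> 'm \<Rightarrow> 'm" where
  "cm l m n x y \<equiv> cmp C (Mo n) (Mo m) (Mo l) x y"

lemma cm_closed: "x \<in> carrier (G l m) \<Longrightarrow> y \<in> carrier (G m n) \<Longrightarrow> cm l m n x y \<in> carrier (G l n)"
  using pa_cmp[OF PA ob ob ob] by simp

lemma hom_left: "y \<in> carrier (G m n) \<Longrightarrow> (\<lambda>x. cm l m n x y) \<in> hom (G l m) (G l n)"
  by (rule homI) (use cm_closed pa_bil_l[OF PA ob ob ob] in auto)

lemma hom_right: "x \<in> carrier (G l m) \<Longrightarrow> (\<lambda>y. cm l m n x y) \<in> hom (G m n) (G l n)"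
  by (rule homI) (use cm_closed pa_bil_r[OF PA ob ob ob] in auto)

definition Ev :: "nat \<Rightarrow> nat \<Rightarrow> R \<Rightarrow> 'm" where
  "Ev m n p = finprod (G m n) (\<lambda>k. Mm m n (fn k) [^]\<^bsub>G m n\<^esub> Poly_Mapping.lookup p k) (Poly_Mapping.keys p)"

definition wf :: "nat \<Rightarrow> nat \<Rightarrow> R \<Rightarrow> bool" where
  "wf m n p \<longleftrightarrow> (\<forall>k \<in> Poly_Mapping.keys p. fn k \<in> lam_hom m n)"

lemma term_closed: "wf m n p \<Longrightarrow> (\<lambda>k. Mm m n (fn k) [^]\<^bsub>G m n\<^esub> Poly_Mapping.lookup p k) \<in> A \<rightarrow> carrier (G m n)"
proof
  fix k assume w: "wf m n p"
  show "Mm m n (fn k) [^]\<^bsub>G m n\<^esub> Poly_Mapping.lookup p k \<in> carrier (G m n)"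
  proof (cases "k \<in> Poly_Mapping.keys p")
    case True
    then show ?thesis using w mmh group.int_pow_closed[OF grp] unfolding wf_def by blast
  next
    case False
    then have "Poly_Mapping.lookup p k = 0" by (simp add: in_keys_iff)
    then show ?thesis using pa_zer[OF PA ob ob] by simp
  qed
qed

lemma term_in: "wf m n p \<Longrightarrow> Mm m n (fn k) [^]\<^bsub>G m n\<^esub> Poly_Mapping.lookup p k \<in> carrier (G m n)"
  using term_closed[of m n p UNIV] by blast

lemma Ev_closed: "wf m n p \<Longrightarrow> Ev m n p \<in> carrier (G m n)"
  unfolding Ev_def using comm_monoid.finprod_closed[OF comm_group.axioms(1)[OF cg] term_closed] by blast

lemma Ev_super: "wf m n p \<Longrightarrow> finite A \<Longrightarrow> Poly_Mapping.keys p \<subseteq> A \<Longrightarrow>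
   Ev m n p = finprod (G m n) (\<lambda>k. Mm m n (fn k) [^]\<^bsub>G m n\<^esub> Poly_Mapping.lookup p k) A"
  unfolding Ev_def
  by (rule comm_monoid.finprod_mono_neutral_cong_left[OF comm_group.axioms(1)[OF cg]])
     (use term_closed[of m n p A] in \<open>auto simp: in_keys_iff\<close>)

lemma wf_add: "wf m n p \<Longrightarrow> wf m n q \<Longrightarrow> wf m n (p + q)"
  unfolding wf_def using keys_add[of p q] by blast

lemma wf_neg: "wf m n p \<Longrightarrow> wf m n (- p)"
  unfolding wf_def by simp

lemma wf_diff: "wf m n p \<Longrightarrow> wf m n q \<Longrightarrow> wf m n (p - q)"
  using wf_add[of m n p "- q"] wf_neg[of m n q] by simp

lemma wf_zero: "wf m n 0" unfolding wf_def by simp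

lemma wf_single: "fn k \<in> lam_hom m n \<Longrightarrow> wf m n (Poly_Mapping.single k c)"
  unfolding wf_def by simp

lemma wf_mult: "wf m l p \<Longrightarrow> wf l n q \<Longrightarrow> wf m n (p * q)"
  unfolding wf_def
proof
  fix k assume p: "\<forall>k\<in>Poly_Mapping.keys p. fn k \<in> lam_hom m l" and q: "\<forall>k\<in>Poly_Mapping.keys q. fn k \<in> lam_hom l n"
    and k: "k \<in> Poly_Mapping.keys (p * q)"
  then obtain a b where "k = a + b" "a \<in> Poly_Mapping.keys p" "b \<in> Poly_Mapping.keys q"
    using keys_mult[of p q] k by blast
  then show "fn k \<in> lam_hom m n" using p q lam_hom_comp[of "fn a" m l "fn b" n] by (simp add: plus_endo_def)
qed

lemma Ev_add: assumes "wf m n p" "wf m n q" shows "Ev m n (p + q) = Ev m n p \<otimes>\<^bsub>G m n\<^esub> Ev m n q"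
proof -
  interpret cgr: comm_group "G m n" by (rule cg)
  let ?A = "Poly_Mapping.keys p \<union> Poly_Mapping.keys q"
  let ?t = "\<lambda>r k. Mm m n (fn k) [^]\<^bsub>G m n\<^esub> Poly_Mapping.lookup r k"
  have "Ev m n (p + q) = finprod (G m n) (?t (p + q)) ?A"
    by (rule Ev_super) (use assms wf_add keys_add[of p q] in auto)
  also have "\<dots> = finprod (G m n) (\<lambda>k. ?t p k \<otimes>\<^bsub>G m n\<^esub> ?t q k) ?A"
  proof (rule cgr.finprod_cong')
    show "(\<lambda>k. ?t p k \<otimes>\<^bsub>G m n\<^esub> ?t q k) \<in> ?A \<rightarrow> carrier (G m n)"
      by (intro Pi_I cgr.m_closed term_in assms)
    fix k assume "k \<in> ?A"
    then have "Mm m n (fn k) \<in> carrier (G m n)" using assms mmh unfolding wf_def by blast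
    then show "?t (p + q) k = ?t p k \<otimes>\<^bsub>G m n\<^esub> ?t q k" by (simp add: lookup_add cgr.int_pow_mult)
  qed simp
  also have "\<dots> = finprod (G m n) (?t p) ?A \<otimes>\<^bsub>G m n\<^esub> finprod (G m n) (?t q) ?A"
    by (rule cgr.finprod_multf) (rule term_closed[OF assms(1)], rule term_closed[OF assms(2)])
  also have "\<dots> = Ev m n p \<otimes>\<^bsub>G m n\<^esub> Ev m n q"
    using Ev_super[OF assms(1), of ?A] Ev_super[OF assms(2), of ?A] by simp
  finally show ?thesis .
qed

lemma Ev_zero: "Ev m n 0 = \<one>\<^bsub>G m n\<^esub>"
  unfolding Ev_def using comm_monoid.finprod_empty[OF comm_group.axioms(1)[OF cg]] by simp

lemma Ev_neg: assumes "wf m n p" shows "Ev m n (- p) = inv\<^bsub>G m n\<^esub> (Ev m n p)"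
proof -
  interpret cgr: comm_group "G m n" by (rule cg)
  have "Ev m n (- p) \<otimes>\<^bsub>G m n\<^esub> Ev m n p = Ev m n (- p + p)"
    using Ev_add[OF wf_neg[OF assms] assms] by simp
  also have "\<dots> = \<one>\<^bsub>G m n\<^esub>" by (simp add: Ev_zero)
  finally have "Ev m n (- p) \<otimes>\<^bsub>G m n\<^esub> Ev m n p = \<one>\<^bsub>G m n\<^esub>" .
  then have "inv\<^bsub>G m n\<^esub> (Ev m n p) = Ev m n (- p)"
    by (rule cgr.inv_equality) (rule Ev_closed[OF assms], rule Ev_closed[OF wf_neg[OF assms]])
  then show ?thesis by simp
qed

lemma Ev_diff: "wf m n p \<Longrightarrow> wf m n q \<Longrightarrow> Ev m n (p - q) = Ev m n p \<otimes>\<^bsub>G m n\<^esub> inv\<^bsub>G m n\<^esub> (Ev m n q)"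
  using Ev_add[of m n p "- q"] Ev_neg[of m n q] wf_neg[of m n q] by simp

lemma Ev_single: assumes "fn k \<in> lam_hom m n"
  shows "Ev m n (Poly_Mapping.single k c) = Mm m n (fn k) [^]\<^bsub>G m n\<^esub> c"
proof -
  interpret cgr: comm_group "G m n" by (rule cg)
  show ?thesis
  proof (cases "c = 0")
    case True then show ?thesis by (simp add: Ev_def)
  next
    case False
    let ?f = "\<lambda>ka. Mm m n (fn ka) [^]\<^bsub>G m n\<^esub> Poly_Mapping.lookup (Poly_Mapping.single k c) ka"
    have fk: "?f k \<in> carrier (G m n)" by (rule term_in) (rule wf_single[OF assms])
    have "Ev m n (Poly_Mapping.single k c) = finprod (G m n) ?f (insert k {})"
      using False by (simp add: Ev_def)
    also have "\<dots> = ?f k \<otimes>\<^bsub>G m n\<^esub> finprod (G m n) ?f {}"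
      by (rule cgr.finprod_insert) (use fk in auto)
    also have "\<dots> = ?f k" using fk by (simp del: HG_simps)
    finally show ?thesis by simp
  qed
qed

lemma Ev_sum: "finite A \<Longrightarrow> (\<And>a. a \<in> A \<Longrightarrow> wf m n (g a)) \<Longrightarrow>
  Ev m n (\<Sum>a\<in>A. g a) = finprod (G m n) (\<lambda>a. Ev m n (g a)) A \<and> wf m n (\<Sum>a\<in>A. g a)"
proof (induction A rule: finite_induct)
  case empty
  interpret cgr: comm_group "G m n" by (rule cg)
  show ?case by (simp add: Ev_zero wf_zero)
next
  case (insert a A)
  interpret cgr: comm_group "G m n" by (rule cg)
  have IH: "Ev m n (\<Sum>a\<in>A. g a) = finprod (G m n) (\<lambda>a. Ev m n (g a)) A" "wf m n (\<Sum>a\<in>A. g a)"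
    using insert by auto
  have ga: "wf m n (g a)" using insert by simp
  have cl: "(\<lambda>a. Ev m n (g a)) \<in> A \<rightarrow> carrier (G m n)" using insert Ev_closed by auto
  show ?case using insert IH ga cl Ev_add[OF ga IH(2)] Ev_closed[OF ga] by (simp add: wf_add)
qed

lemma pm_expand: "p = (\<Sum>a\<in>Poly_Mapping.keys p. Poly_Mapping.single a (Poly_Mapping.lookup p a))"
proof (rule poly_mapping_eqI)
  fix k
  show "Poly_Mapping.lookup p k = Poly_Mapping.lookup (\<Sum>a\<in>Poly_Mapping.keys p. Poly_Mapping.single a (Poly_Mapping.lookup p a)) k"
    by (simp add: lookup_sum lookup_single when_def in_keys_iff)
qed

lemma cm_pow: assumes "x \<in> carrier (G l m)" "y \<in> carrier (G m n)"
  shows "cm l m n (x [^]\<^bsub>G l m\<^esub> (c::int)) (y [^]\<^bsub>G m n\<^esub> (d::int)) = cm l m n x y [^]\<^bsub>G l n\<^esub> (c * d)"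
proof -
  have yd: "y [^]\<^bsub>G m n\<^esub> d \<in> carrier (G m n)" using assms group.int_pow_closed[OF grp] by blast
  have "cm l m n (x [^]\<^bsub>G l m\<^esub> c) (y [^]\<^bsub>G m n\<^esub> d) = cm l m n x (y [^]\<^bsub>G m n\<^esub> d) [^]\<^bsub>G l n\<^esub> c"
    using hom_int_pow[OF hom_left[OF yd] assms(1) grp grp] by simp
  also have "cm l m n x (y [^]\<^bsub>G m n\<^esub> d) = cm l m n x y [^]\<^bsub>G l n\<^esub> d"
    using hom_int_pow[OF hom_right[OF assms(1)] assms(2) grp grp] by simp
  also have "(cm l m n x y [^]\<^bsub>G l n\<^esub> d) [^]\<^bsub>G l n\<^esub> c = cm l m n x y [^]\<^bsub>G l n\<^esub> (c * d)"
    using group.int_pow_pow[OF grp cm_closed[OF assms]] by (simp add: mult.commute)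
  finally show ?thesis .
qed

lemma Ev_mult: assumes wp: "wf m l p" and wq: "wf l n q"
  shows "Ev m n (p * q) = cm m l n (Ev m l p) (Ev l n q)"
proof -
  let ?Kp = "Poly_Mapping.keys p" and ?Kq = "Poly_Mapping.keys q"
  let ?lp = "Poly_Mapping.lookup p" and ?lq = "Poly_Mapping.lookup q"
  have sp: "\<And>a. a \<in> ?Kp \<Longrightarrow> wf m l (Poly_Mapping.single a (?lp a))" using wp wf_single unfolding wf_def by blast
  have sq: "\<And>b. b \<in> ?Kq \<Longrightarrow> wf l n (Poly_Mapping.single b (?lq b))" using wq wf_single unfolding wf_def by blast
  have fa: "\<And>a. a \<in> ?Kp \<Longrightarrow> fn a \<in> lam_hom m l" using wp unfolding wf_def by blast
  have fb: "\<And>b. b \<in> ?Kq \<Longrightarrow> fn b \<in> lam_hom l n" using wq unfolding wf_def by blast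
  have fab: "fn (a + b) \<in> lam_hom m n" if a: "a \<in> ?Kp" and b: "b \<in> ?Kq" for a b
    using lam_hom_comp[OF fa[OF a] fb[OF b]] by (simp add: plus_endo_def)
  have wab: "\<And>a b. a \<in> ?Kp \<Longrightarrow> b \<in> ?Kq \<Longrightarrow> wf m n (Poly_Mapping.single (a + b) (?lp a * ?lq b))"
    using fab by (intro wf_single)
  have pq: "p * q = (\<Sum>a\<in>?Kp. \<Sum>b\<in>?Kq. Poly_Mapping.single (a + b) (?lp a * ?lq b))"
    apply (subst pm_expand[of p], subst pm_expand[of q])
    by (simp add: sum_distrib_left sum_distrib_right mult_single sum.swap[of _ "Poly_Mapping.keys q"])
  have inner: "\<And>a. a \<in> ?Kp \<Longrightarrow> wf m n (\<Sum>b\<in>?Kq. Poly_Mapping.single (a + b) (?lp a * ?lq b)) \<and>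
      Ev m n (\<Sum>b\<in>?Kq. Poly_Mapping.single (a + b) (?lp a * ?lq b)) =
      finprod (G m n) (\<lambda>b. Ev m n (Poly_Mapping.single (a + b) (?lp a * ?lq b))) ?Kq"
    using Ev_sum[of ?Kq m n] wab by simp
  have outer: "Ev m n (p * q) = finprod (G m n) (\<lambda>a. Ev m n (\<Sum>b\<in>?Kq. Poly_Mapping.single (a + b) (?lp a * ?lq b))) ?Kp"
    unfolding pq by (rule conjunct1[OF Ev_sum]) (use inner in auto)
  have "Ev m n (p * q) = finprod (G m n) (\<lambda>a. finprod (G m n) (\<lambda>b. Ev m n (Poly_Mapping.single (a + b) (?lp a * ?lq b))) ?Kq) ?Kp"
    unfolding outer
  proof (rule comm_monoid.finprod_cong'[OF comm_group.axioms(1)[OF cg]])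
    show "(\<lambda>a. finprod (G m n) (\<lambda>b. Ev m n (Poly_Mapping.single (a + b) (?lp a * ?lq b))) ?Kq) \<in> ?Kp \<rightarrow> carrier (G m n)"
    proof (rule Pi_I)
      fix a assume a: "a \<in> ?Kp"
      have "Ev m n (\<Sum>b\<in>?Kq. Poly_Mapping.single (a + b) (?lp a * ?lq b)) \<in> carrier (G m n)"
        using inner[OF a] Ev_closed by blast
      then show "finprod (G m n) (\<lambda>b. Ev m n (Poly_Mapping.single (a + b) (?lp a * ?lq b))) ?Kq \<in> carrier (G m n)"
        using inner[OF a] by simp
    qed
  qed (use inner in auto)
  also have "\<dots> = finprod (G m n) (\<lambda>a. finprod (G m n) (\<lambda>b. cm m l n (Ev m l (Poly_Mapping.single a (?lp a))) (Ev l n (Poly_Mapping.single b (?lq b)))) ?Kq) ?Kp"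
  proof (rule comm_monoid.finprod_cong'[OF comm_group.axioms(1)[OF cg]])
    fix a assume a: "a \<in> ?Kp"
    show "finprod (G m n) (\<lambda>b. Ev m n (Poly_Mapping.single (a + b) (?lp a * ?lq b))) ?Kq =
          finprod (G m n) (\<lambda>b. cm m l n (Ev m l (Poly_Mapping.single a (?lp a))) (Ev l n (Poly_Mapping.single b (?lq b)))) ?Kq"
    proof (rule comm_monoid.finprod_cong'[OF comm_group.axioms(1)[OF cg]])
      fix b assume b: "b \<in> ?Kq"
      have "Ev m n (Poly_Mapping.single (a + b) (?lp a * ?lq b)) = Mm m n (fn b \<circ> fn a) [^]\<^bsub>G m n\<^esub> (?lp a * ?lq b)"
        using Ev_single[OF fab[OF a b]] by (simp add: plus_endo_def)
      also have "\<dots> = cm m l n (Mm m l (fn a) [^]\<^bsub>G m l\<^esub> ?lp a) (Mm l n (fn b) [^]\<^bsub>G l n\<^esub> ?lq b)"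
        using cm_pow[OF mmh[OF fa[OF a]] mmh[OF fb[OF b]]] mm_comp[OF fa[OF a] fb[OF b]] by simp
      finally show "Ev m n (Poly_Mapping.single (a + b) (?lp a * ?lq b)) =
          cm m l n (Ev m l (Poly_Mapping.single a (?lp a))) (Ev l n (Poly_Mapping.single b (?lq b)))"
        using Ev_single[OF fa[OF a]] Ev_single[OF fb[OF b]] by simp
    next
      show "(\<lambda>b. cm m l n (Ev m l (Poly_Mapping.single a (?lp a))) (Ev l n (Poly_Mapping.single b (?lq b)))) \<in> ?Kq \<rightarrow> carrier (G m n)"
        using cm_closed Ev_closed sp[OF a] sq by blast
    qed simp
  next
    show "(\<lambda>a. finprod (G m n) (\<lambda>b. cm m l n (Ev m l (Poly_Mapping.single a (?lp a))) (Ev l n (Poly_Mapping.single b (?lq b)))) ?Kq) \<in> ?Kp \<rightarrow> carrier (G m n)"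
    proof (rule Pi_I)
      fix a assume a: "a \<in> ?Kp"
      have "(\<lambda>b. cm m l n (Ev m l (Poly_Mapping.single a (?lp a))) (Ev l n (Poly_Mapping.single b (?lq b)))) \<in> ?Kq \<rightarrow> carrier (G m n)"
        using cm_closed Ev_closed sp[OF a] sq by blast
      then show "finprod (G m n) (\<lambda>b. cm m l n (Ev m l (Poly_Mapping.single a (?lp a))) (Ev l n (Poly_Mapping.single b (?lq b)))) ?Kq \<in> carrier (G m n)"
        by (rule comm_monoid.finprod_closed[OF comm_group.axioms(1)[OF cg]])
    qed
  qed simp
  also have "\<dots> = finprod (G m n) (\<lambda>a. cm m l n (Ev m l (Poly_Mapping.single a (?lp a))) (Ev l n q)) ?Kp"
  proof (rule comm_monoid.finprod_cong'[OF comm_group.axioms(1)[OF cg]])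
    fix a assume a: "a \<in> ?Kp"
    have "Ev l n q = finprod (G l n) (\<lambda>b. Ev l n (Poly_Mapping.single b (?lq b))) ?Kq"
      using Ev_sum[of ?Kq l n "\<lambda>b. Poly_Mapping.single b (?lq b)"] sq pm_expand[of q] by simp
    then show "finprod (G m n) (\<lambda>b. cm m l n (Ev m l (Poly_Mapping.single a (?lp a))) (Ev l n (Poly_Mapping.single b (?lq b)))) ?Kq
        = cm m l n (Ev m l (Poly_Mapping.single a (?lp a))) (Ev l n q)"
      using hom_finprod'[OF cg cg hom_right[OF Ev_closed[OF sp[OF a]]], of "\<lambda>b. Ev l n (Poly_Mapping.single b (?lq b))" ?Kq]
        Ev_closed sq by auto
  next
    show "(\<lambda>a. cm m l n (Ev m l (Poly_Mapping.single a (?lp a))) (Ev l n q)) \<in> ?Kp \<rightarrow> carrier (G m n)"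
      using cm_closed Ev_closed sp wq by blast
  qed simp
  also have "\<dots> = cm m l n (Ev m l p) (Ev l n q)"
  proof -
    have "Ev m l p = finprod (G m l) (\<lambda>a. Ev m l (Poly_Mapping.single a (?lp a))) ?Kp"
      using Ev_sum[of ?Kp m l "\<lambda>a. Poly_Mapping.single a (?lp a)"] sp pm_expand[of p] by simp
    then show ?thesis
      using hom_finprod'[OF cg cg hom_left[OF Ev_closed[OF wq]], of "\<lambda>a. Ev m l (Poly_Mapping.single a (?lp a))" ?Kp]
        Ev_closed sp by auto
  qed
  finally show ?thesis .
qed

end



definition KK :: "nat \<Rightarrow> R" where
  "KK m = (-1) ^ m * (fc (m+1) 0 * dg m (m+1) - dg (m-1) m * fc m 0)"

context ctx
begin

lemma inv_ng: "x \<in> carrier (G m n) \<Longrightarrow> inv\<^bsub>G m n\<^esub> x = ng C (Mo n) (Mo m) x"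
  by (rule group.inv_equality[OF grp]) (use pa_linv[OF PA ob ob] pa_ng[OF PA ob ob] in auto)

lemma wf_fc: assumes n: "1 \<le> n" shows "wf (n-1) n (fc n i)"
  unfolding fc_def mk_def by (rule wf_single) (use eps_lam_hom[OF n] in \<open>simp only: endo.sel\<close>)

lemma wf_dg: "wf (n+1) n (dg n i)"
  unfolding dg_def mk_def by (rule wf_single) (use eta_lam_hom[of n i] in \<open>simp only: endo.sel\<close>)

lemma fn0: "fn (0::endo) = id" by (simp add: zero_endo_def)

lemma wf_one: "wf n n 1"
proof -
  have "wf n n (Poly_Mapping.single (0::endo) 1)" by (rule wf_single) (simp add: fn0 id_lam_hom)
  then show ?thesis by simp
qed

lemma wf_sign: "wf m n p \<Longrightarrow> wf m n ((-1) ^ k * p)"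
  by (cases "even k") (auto simp: wf_neg)

lemma wf_sum: "finite A \<Longrightarrow> (\<And>a. a \<in> A \<Longrightarrow> wf m n (g a)) \<Longrightarrow> wf m n (\<Sum>a\<in>A. g a)"
  using Ev_sum by blast

lemma wf_pow: "wf n n p \<Longrightarrow> wf n n (p ^ k)"
  by (induction k) (auto simp: wf_one wf_mult)

lemma face_Ev: "1 \<le> n \<Longrightarrow> face Mm n i = Ev (n-1) n (fc n i)"
  unfolding face_def fc_def mk_def
  using Ev_single[of "E (eps n i)" "n-1" n 1] eps_lam_hom[of n i] mmh[of "eps n i" "n-1" n]
    group.int_pow_1[OF grp] by simp

lemma degen_Ev: "degen Mm n i = Ev (n+1) n (dg n i)"
  unfolding degen_def dg_def mk_def
  using Ev_single[of "E (eta n i)" "n+1" n 1] eta_lam_hom[of n i] mmh[of "eta n i" "n+1" n]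
    group.int_pow_1[OF grp] by simp

lemma idm_Ev: "idm C (Mo n) = Ev n n 1"
proof -
  have "Ev n n (Poly_Mapping.single (0::endo) 1) = Mm n n (fn 0) [^]\<^bsub>G n n\<^esub> (1::int)"
    by (rule Ev_single) (simp add: fn0 id_lam_hom)
  also have "\<dots> = Mm n n id" unfolding fn0 by (rule group.int_pow_1[OF grp mmh[OF id_lam_hom]])
  finally show ?thesis using mm_id by simp
qed

lemma sgnm_Ev: "wf m n p \<Longrightarrow> sgnm C (Mo n) (Mo m) k (Ev m n p) = Ev m n ((-1) ^ k * p)"
  unfolding sgnm_def by (cases "even k") (auto simp: Ev_neg inv_ng[OF Ev_closed])

lemma pls_Ev: "wf m n p \<Longrightarrow> wf m n q \<Longrightarrow> pls C (Mo n) (Mo m) (Ev m n p) (Ev m n q) = Ev m n (p + q)"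
  using Ev_add by simp

lemma ng_Ev: "wf m n p \<Longrightarrow> ng C (Mo n) (Mo m) (Ev m n p) = Ev m n (- p)"
  using Ev_neg inv_ng[OF Ev_closed] by simp

lemma zer_Ev: "zer C (Mo n) (Mo m) = Ev m n 0"
  using Ev_zero by simp

lemma cmp_Ev: "wf m l p \<Longrightarrow> wf l n q \<Longrightarrow> cmp C (Mo n) (Mo l) (Mo m) (Ev m l p) (Ev l n q) = Ev m n (p * q)"
  using Ev_mult by simp

lemma foldr_Ev:
  assumes "\<And>i. wf m n (F i)"
  shows "foldr (\<lambda>i acc. pls C (Mo n) (Mo m) (sgnm C (Mo n) (Mo m) i (Ev m n (F i))) acc) xs (zer C (Mo n) (Mo m))
     = Ev m n (sum_list (map (\<lambda>i. (-1) ^ i * F i) xs)) \<and> wf m n (sum_list (map (\<lambda>i. (-1) ^ i * F i) xs))"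
proof (induction xs)
  case Nil then show ?case by (simp add: zer_Ev wf_zero)
next
  case (Cons x xs)
  then show ?case using assms by (simp add: sgnm_Ev pls_Ev wf_sign wf_add)
qed

lemma altsum_Ev:
  assumes "\<And>i. wf m n (F i)"
  shows "altsum C (Mo n) (Mo m) N (\<lambda>i. Ev m n (F i)) = Ev m n (\<Sum>i\<le>N. (-1) ^ i * F i)"
proof -
  have sl: "sum_list (map (\<lambda>i. (-1) ^ i * F i) [0..<Suc N]) = (\<Sum>i\<le>N. (-1) ^ i * F i)"
    by (simp only: sum_set_upt_conv_sum_list_nat[symmetric] set_upt atLeast0LessThan lessThan_Suc_atMost)
  have fe: "foldr (\<lambda>i acc. pls C (Mo n) (Mo m) (sgnm C (Mo n) (Mo m) i (Ev m n (F i))) acc) [0..<Suc N] (zer C (Mo n) (Mo m))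
     = Ev m n (sum_list (map (\<lambda>i. (-1) ^ i * F i) [0..<Suc N]))"
    using foldr_Ev[where m=m and n=n and F=F and xs="[0..<Suc N]"] assms by blast
  show ?thesis unfolding altsum_def fe sl ..
qed

lemma bop_Ev: "1 \<le> n \<Longrightarrow> bop C Mo Mm n = Ev (n-1) n (B n)"
proof -
  assume n: "1 \<le> n"
  have "face Mm n = (\<lambda>i. Ev (n-1) n (fc n i))" using face_Ev[OF n] by auto
  then show ?thesis unfolding bop_def B_def using altsum_Ev[of "n-1" n "fc n" n] wf_fc[OF n] by simp
qed

lemma dop_Ev: "dop C Mo Mm n = Ev (n+1) n (Dd n)"
proof -
  have "degen Mm n = (\<lambda>i. Ev (n+1) n (dg n i))" using degen_Ev by auto
  then show ?thesis unfolding dop_def Dd_def using altsum_Ev[of "n+1" n "dg n" "n+1"] wf_dg by simp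
qed

lemma wf_KK: "1 \<le> m \<Longrightarrow> wf m m (KK m)"
proof -
  assume m: "1 \<le> m"
  have a: "wf m (m+1) (fc (m+1) 0)" using wf_fc[of "m+1" 0] by simp
  have b: "wf (m-1+1) (m-1) (dg (m-1) m)" using wf_dg[of "m-1" m] .
  then have b': "wf m (m-1) (dg (m-1) m)" using m by simp
  show ?thesis unfolding KK_def
    by (intro wf_sign wf_diff wf_mult[OF a wf_dg] wf_mult[OF b' wf_fc[OF m]])
qed

lemma karoubi_Ev: "1 \<le> m \<Longrightarrow> karoubi C Mo Mm m = Ev m m (KK m)"
proof -
  assume m: "1 \<le> m"
  have a: "wf m (m+1) (fc (m+1) 0)" using wf_fc[of "m+1" 0] by simp
  have b: "wf m (m-1) (dg (m-1) m)" using wf_dg[of "m-1" m] m by simp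
  have fa: "face Mm (m+1) 0 = Ev m (m+1) (fc (m+1) 0)" using face_Ev[of "m+1" 0] by simp
  have db: "degen Mm (m-1) m = Ev m (m-1) (dg (m-1) m)" using degen_Ev[of "m-1" m] m by simp
  have c1: "cmp C (Mo m) (Mo (m + 1)) (Mo m) (face Mm (m + 1) 0) (degen Mm m (m + 1)) = Ev m m (fc (m+1) 0 * dg m (m+1))"
    unfolding fa degen_Ev by (rule cmp_Ev[OF a wf_dg])
  have c2: "cmp C (Mo m) (Mo (m - 1)) (Mo m) (degen Mm (m - 1) m) (face Mm m 0) = Ev m m (dg (m-1) m * fc m 0)"
    unfolding db face_Ev[OF m] by (rule cmp_Ev[OF b wf_fc[OF m]])
  have w1: "wf m m (fc (m+1) 0 * dg m (m+1))" by (rule wf_mult[OF a wf_dg])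
  have w2: "wf m m (dg (m-1) m * fc m 0)" by (rule wf_mult[OF b wf_fc[OF m]])
  have w3: "wf m m (fc (m+1) 0 * dg m (m+1) - dg (m-1) m * fc m 0)" by (rule wf_diff[OF w1 w2])
  have "karoubi C Mo Mm m = sgnm C (Mo m) (Mo m) m (pls C (Mo m) (Mo m) (Ev m m (fc (m+1) 0 * dg m (m+1)))
          (ng C (Mo m) (Mo m) (Ev m m (dg (m-1) m * fc m 0))))"
    unfolding karoubi_def c1 c2 using m by simp
  also have "\<dots> = sgnm C (Mo m) (Mo m) m (Ev m m (fc (m+1) 0 * dg m (m+1) - dg (m-1) m * fc m 0))"
    using pls_Ev[OF w1 wf_neg[OF w2]] ng_Ev[OF w2] by simp
  also have "\<dots> = Ev m m (KK m)" unfolding KK_def by (rule sgnm_Ev[OF w3])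
  finally show ?thesis .
qed

lemma kpow_Ev: "1 \<le> m \<Longrightarrow> karoubi_pow C Mo Mm m k = Ev m m (KK m ^ k)"
proof (induction k)
  case 0 then show ?case by (simp add: idm_Ev)
next
  case (Suc k)
  then show ?case using cmp_Ev[OF wf_KK[OF Suc.prems] wf_pow[OF wf_KK[OF Suc.prems]], of k]
    karoubi_Ev[OF Suc.prems] by simp
qed

lemma dk_Ev: "dk C Mo Mm n = Ev n n ((-1) ^ n * (fc (n+1) 0 * (KK (n+1) ^ n * dg n (n+1))))"
proof -
  have m: "1 \<le> n + 1" by simp
  have a: "wf n (n+1) (fc (n+1) 0)" using wf_fc[of "n+1" 0] by simp
  have k: "wf (n+1) (n+1) (KK (n+1) ^ n)" by (rule wf_pow[OF wf_KK[OF m]])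
  have i: "cmp C (Mo n) (Mo (n + 1)) (Mo (n + 1)) (karoubi_pow C Mo Mm (n + 1) n) (degen Mm n (n + 1))
      = Ev (n+1) n (KK (n+1) ^ n * dg n (n+1))"
    unfolding kpow_Ev[OF m] degen_Ev by (rule cmp_Ev[OF k wf_dg])
  have o: "cmp C (Mo n) (Mo (n + 1)) (Mo n) (face Mm (n + 1) 0) (Ev (n+1) n (KK (n+1) ^ n * dg n (n+1)))
      = Ev n n (fc (n+1) 0 * (KK (n+1) ^ n * dg n (n+1)))"
    using face_Ev[of "n+1" 0] cmp_Ev[OF a wf_mult[OF k wf_dg]] by simp
  have w: "wf n n (fc (n+1) 0 * (KK (n+1) ^ n * dg n (n+1)))" by (rule wf_mult[OF a wf_mult[OF k wf_dg]])
  show ?thesis unfolding dk_def i o using sgnm_Ev[OF w] by simp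
qed

lemma wf_Pi: "wf n n ((-1) ^ n * (fc (n+1) 0 * (KK (n+1) ^ n * dg n (n+1))))"
proof -
  have a: "wf n (n+1) (fc (n+1) 0)" using wf_fc[of "n+1" 0] by simp
  have k: "wf (n+1) (n+1) (KK (n+1) ^ n)" by (rule wf_pow[OF wf_KK]) simp
  show ?thesis by (rule wf_sign[OF wf_mult[OF a wf_mult[OF k wf_dg]]])
qed

end

lemma sgn_pow: "((-1::R) ^ a * X) ^ k = (-1) ^ (a * k) * X ^ k"
proof (cases "even a")
  case True
  have e1: "(-1::R) ^ a = 1" using True by (rule neg_one_even_power)
  have ak: "even (a * k)" using True by simp
  have e2: "(-1::R) ^ (a * k) = 1" using ak by (rule neg_one_even_power)
  show ?thesis unfolding e1 e2 by simp
next
  case False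
  have e1: "(-1::R) ^ a = -1" using False by (rule neg_one_odd_power)
  have e2: "(-1::R) ^ (a * k) = ((-1) ^ a) ^ k" by (rule power_mult)
  have e3: "(-1::R) * X = - X" by simp
  show ?thesis unfolding e2 e1 e3 by (rule power_minus)
qed

lemma Pi_ring: "(-1) ^ n * (fc (n+1) 0 * (KK (n+1) ^ n * dg n (n+1))) = Pi' n"
proof -
  have KK: "KK (n+1) = (-1) ^ (n+1) * K' (n+1)"
    unfolding KK_def K'_def by (simp only: T0_r[of "n+1"] add_diff_cancel_right')
  have ev: "even ((n+1) * n)" by simp
  have "KK (n+1) ^ n = (-1) ^ ((n+1) * n) * K' (n+1) ^ n" unfolding KK by (rule sgn_pow)
  also have "(-1::R) ^ ((n+1) * n) = 1" using ev by (rule neg_one_even_power)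
  finally have "KK (n+1) ^ n = K' (n+1) ^ n" by simp
  then show ?thesis unfolding Pi'_def Y_def by (simp only: mult.assoc)
qed



theorem mainTheorem16:
  fixes C :: "('o, 'm) preadd_cat"
    and Mo :: "nat \<Rightarrow> 'o"
    and Mm :: "nat \<Rightarrow> nat \<Rightarrow> (int \<Rightarrow> int) \<Rightarrow> 'm"
  assumes "preadditive C"
    and "duplicial C Mo Mm"
  shows "(\<forall>n\<ge>1. cmp C (Mo n) (Mo n) (Mo (n - 1)) (bop C Mo Mm n) (dk C Mo Mm n)
                 = cmp C (Mo n) (Mo (n - 1)) (Mo (n - 1)) (dk C Mo Mm (n - 1)) (bop C Mo Mm n))
       \<and> (\<forall>n. cmp C (Mo n) (Mo n) (Mo (n + 1)) (dop C Mo Mm n) (dk C Mo Mm n)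
                 = cmp C (Mo n) (Mo (n + 1)) (Mo (n + 1)) (dk C Mo Mm (n + 1)) (dop C Mo Mm n))"
proof -
  interpret X: ctx C Mo Mm by unfold_locales (rule assms(1), rule assms(2))
  have dkE: "dk C Mo Mm k = X.Ev k k (Pi' k)" for k using X.dk_Ev[of k] Pi_ring[of k] by simp
  have wP: "X.wf k k (Pi' k)" for k using X.wf_Pi[of k] Pi_ring[of k] by simp
  have wB: "X.wf (n-1) n (B n)" if n: "1 \<le> n" for n
    unfolding B_def by (rule X.wf_sum) (simp, rule X.wf_sign, rule X.wf_fc[OF n])
  have wD: "X.wf (n+1) n (Dd n)" for n
    unfolding Dd_def by (rule X.wf_sum) (simp, rule X.wf_sign, rule X.wf_dg)
  have part1: "cmp C (Mo n) (Mo n) (Mo (n - 1)) (bop C Mo Mm n) (dk C Mo Mm n)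
                 = cmp C (Mo n) (Mo (n - 1)) (Mo (n - 1)) (dk C Mo Mm (n - 1)) (bop C Mo Mm n)"
    if n: "1 \<le> n" for n
  proof -
    have "cmp C (Mo n) (Mo n) (Mo (n - 1)) (bop C Mo Mm n) (dk C Mo Mm n) = X.Ev (n-1) n (B n * Pi' n)"
      unfolding X.bop_Ev[OF n] dkE by (rule X.cmp_Ev[OF wB[OF n] wP])
    also have "B n * Pi' n = Pi' (n-1) * B n" by (rule ring_b[OF n])
    also have "X.Ev (n-1) n (Pi' (n-1) * B n) = cmp C (Mo n) (Mo (n - 1)) (Mo (n - 1)) (dk C Mo Mm (n - 1)) (bop C Mo Mm n)"
      unfolding X.bop_Ev[OF n] dkE by (rule X.cmp_Ev[OF wP wB[OF n], symmetric])
    finally show ?thesis .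
  qed
  have part2: "cmp C (Mo n) (Mo n) (Mo (n + 1)) (dop C Mo Mm n) (dk C Mo Mm n)
                 = cmp C (Mo n) (Mo (n + 1)) (Mo (n + 1)) (dk C Mo Mm (n + 1)) (dop C Mo Mm n)" for n
  proof -
    have "cmp C (Mo n) (Mo n) (Mo (n + 1)) (dop C Mo Mm n) (dk C Mo Mm n) = X.Ev (n+1) n (Dd n * Pi' n)"
      unfolding X.dop_Ev dkE by (rule X.cmp_Ev[OF wD wP])
    also have "Dd n * Pi' n = Pi' (n+1) * Dd n" by (rule ring_d)
    also have "X.Ev (n+1) n (Pi' (n+1) * Dd n) = cmp C (Mo n) (Mo (n + 1)) (Mo (n + 1)) (dk C Mo Mm (n + 1)) (dop C Mo Mm n)"
      unfolding X.dop_Ev dkE by (rule X.cmp_Ev[OF wP wD, symmetric])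
    finally show ?thesis .
  qed
  show ?thesis using part1 part2 by blast
qed



end
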